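(* Let $\mathscr T$ be a functor satisfying (T1)–(T4) and $\mathfrak K=(K,\bigsqcup,\odot,{}^*,{\sim},e)$ a $\mathscr T$-based orthomodular dynamic algebra. Then $\mathfrak K$, $\mathscr P(\mathscr T(\mathbf{Lin}(\widetilde{\mathfrak K})))$ and $(\mathscr P(\mathscr T(K)),\bigcup,\boxdot,{}^\star,\boxtimes,\{e\})$ are mutually isomorphic $\mathscr T$-based orthomodular dynamic algebras.
   Context: Here $h\colon K\to\mathscr P(\mathscr T(K))$ is $h(v)=\{w\in\mathscr T(K)\mid w\sqsubseteq v\}$, and on the powerset $\mathscr P(\mathscr T(K))$: $A\boxdot B=h(\bigsqcup A\odot\bigsqcup B)$, $A^\star=h((\bigsqcup A)^* )$, $\boxtimes A=h({\sim}\bigsqcup A)$, joins are unions, unit $\{e\}$. $\widetilde{\mathfrak K}$ denotes the complete orthomodular lattice $(\widetilde K,\preceq,{}^\perp)$. An involutive unital quantale is $(Q,\bigsqcup,\odot,{}^*,e)$: complete join-semilattice $Q$ (order $\sqsubseteq$), associative $\odot$ distributing over arbitrary joins in each argument, unit $e$, ${}^*$ with $x^{**}=x$, $(x\odot y)^*=y^*\odot x^*$, $(\bigsqcup x_i)^*=\bigsqcup x_i^*$. An involutive generalized dynamic algebra (IDA) is such a quantale with ${\sim}\colon K\to K$ satisfying, for all $x,y$ and families $(x_i)$: ${\sim}(x\odot{\sim}{\sim}y)={\sim}(x\odot y)$; ${\sim}(\bigsqcup{\sim}{\sim}x_i)={\sim}(\bigsqcup x_i)$; $({\sim}x)^*={\sim}x$;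 ${\sim}{\sim}({\sim}{\sim}x\odot y)={\sim}({\sim}x\sqcup{\sim}({\sim}x\sqcup y))$. Test set $\widetilde K=\{{\sim}k\}$; $\bigvee W={\sim}{\sim}\bigsqcup W$; $w^\perp={\sim}w$; $k\preceq l$ iff $\bigvee\{k,l\}=l$; $k\bullet v={\sim}{\sim}(k\odot v)$; $k\equiv l$ iff $k\bullet w=l\bullet w$ for all $w\in\widetilde K$. IDA morphisms preserve arbitrary joins, $\odot$, ${}^*$, unit, ${\sim}$ (category $\mathbb{IDA}$); isomorphisms are bijective morphisms; semi-Foulis means $(\widetilde K,\preceq,{}^\perp)$ is a complete orthomodular lattice. $\mathbb{IM}$: involutive monoids and homomorphisms. For a complete orthomodular lattice $\mathcal M$: $\pi_m(x)=m\wedge(m^\perp\vee x)$; $\mathbf{Lin}(\mathcal M)$ is the set of maps $f$ admitting $f^*$ with $f(x)\le y^\perp\iff x\le f^*(y)^\perp$, an IDA under pointwise joins, composition, ${}^*$, $\mathrm{id}$, ${\sim}f=\pi_{f(1)^\perp}$. For an involutive submonoid $L\supseteq\{\pi_m\}$, $\mathscr P(L)$ is the IDA of subsets of $L$ with union, setwise composition and involution, unit $\{\mathrm{id}\}$, ${\sim}A=\{\pi_{(\bigvee_{a\in A}a(1))^\perp}\}$. $\mathscr T\colon\mathbb{IDA}\to\mathbb{IM}$ satisfies: (T1) $\widetilde K\subseteq\mathscr T(K)\subseteq K$, $\mathscr T(K)$ an involutive submonoid; (T2) for semi-Foulis $\mathfrak K$ with $s=t\iff s\equiv t$ on $\mathscr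 T(K)$, $k\mapsto k\bullet(-)$ is an isomorphism $\mathscr T(\mathfrak K)\to\mathscr T(\mathbf{Lin}(\widetilde{\mathfrak K}))$; (T3) $f\mapsto\{f\}$ is an isomorphism $\mathscr T(\mathbf{Lin}(\mathcal M))\to\mathscr T(\mathscr P(\mathscr T(\mathbf{Lin}(\mathcal M))))$; (T4) $\mathscr T(f)$ is the restriction of $f$. A $\mathscr T$-based orthomodular dynamic algebra is an IDA with: (TODA1) $(\widetilde K,\preceq,{}^\perp)$ a complete orthomodular lattice; (TODA2) every $A$ with $\mathscr T(K)\subseteq A\subseteq K$ closed under $\odot$, ${}^*$, arbitrary joins equals $K$; (TODA3) for $S,T\subseteq\mathscr T(K)$, $\bigsqcup S=\bigsqcup T$ iff $S=T$; (TODA4) for $s,t\in\mathscr T(K)$, $s=t$ iff $s\equiv t$. *)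

theory Defs
  imports Main "HOL-Library.FuncSet"
begin

section \<open>Involutive generalized dynamic algebras (IDAs)\<close>

record 'a ida =
  ida_carrier :: "'a set"
  ida_Sup :: "'a set \<Rightarrow> 'a"
  ida_mult :: "'a \<Rightarrow> 'a \<Rightarrow> 'a"
  ida_inv :: "'a \<Rightarrow> 'a"
  ida_neg :: "'a \<Rightarrow> 'a"
  ida_unit :: 'a

definition ida_le :: "('a, 'z) ida_scheme \<Rightarrow> 'a \<Rightarrow> 'a \<Rightarrow> bool" where
  "ida_le K x y \<longleftrightarrow> ida_Sup K {x, y} = y"

definition is_ida :: "('a, 'z) ida_scheme \<Rightarrow> bool" where
  "is_ida K \<longleftrightarrow>
    (let C = ida_carrier K; J = ida_Sup K; m = ida_mult K; s = ida_inv K;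
         n = ida_neg K; e = ida_unit K; le = ida_le K in
      \<comment> \<open>closure\<close>
      (\<forall>A\<subseteq>C. J A \<in> C) \<and> (\<forall>x\<in>C. \<forall>y\<in>C. m x y \<in> C) \<and> (\<forall>x\<in>C. s x \<in> C) \<and>
      (\<forall>x\<in>C. n x \<in> C) \<and> e \<in> C \<and>
      \<comment> \<open>complete join-semilattice\<close>
      (\<forall>x\<in>C. le x x) \<and> (\<forall>x\<in>C. \<forall>y\<in>C. le x y \<and> le y x \<longrightarrow> x = y) \<and>
      (\<forall>x\<in>C. \<forall>y\<in>C. \<forall>z\<in>C. le x y \<and> le y z \<longrightarrow> le x z) \<and>
      (\<forall>A\<subseteq>C. (\<forall>a\<in>A. le a (J A)) \<and> (\<forall>u\<in>C. (\<forall>a\<in>A. le a u) \<longrightarrow> le (J A) u)) \<and>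
      \<comment> \<open>unital quantale\<close>
      (\<forall>x\<in>C. \<forall>y\<in>C. \<forall>z\<in>C. m (m x y) z = m x (m y z)) \<and>
      (\<forall>x\<in>C. m e x = x \<and> m x e = x) \<and>
      (\<forall>x\<in>C. \<forall>A\<subseteq>C. m x (J A) = J ((\<lambda>a. m x a) ` A) \<and> m (J A) x = J ((\<lambda>a. m a x) ` A)) \<and>
      \<comment> \<open>involution\<close>
      (\<forall>x\<in>C. s (s x) = x) \<and> (\<forall>x\<in>C. \<forall>y\<in>C. s (m x y) = m (s y) (s x)) \<and>
      (\<forall>A\<subseteq>C. s (J A) = J (s ` A)) \<and>
      \<comment> \<open>IDA axioms for sim\<close>
      (\<forall>x\<in>C. \<forall>y\<in>C. n (m x (n (n y))) = n (m x y)) \<and>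
      (\<forall>A\<subseteq>C. n (J ((\<lambda>x. n (n x)) ` A)) = n (J A)) \<and>
      (\<forall>x\<in>C. s (n x) = n x) \<and>
      (\<forall>x\<in>C. \<forall>y\<in>C. n (n (m (n (n x)) y)) = n (J {n x, n (J {n x, y})})))"

definition ida_tests :: "('a, 'z) ida_scheme \<Rightarrow> 'a set" where
  "ida_tests K = ida_neg K ` ida_carrier K"

definition tvee :: "('a, 'z) ida_scheme \<Rightarrow> 'a set \<Rightarrow> 'a" where
  "tvee K W = ida_neg K (ida_neg K (ida_Sup K W))"

definition tle :: "('a, 'z) ida_scheme \<Rightarrow> 'a \<Rightarrow> 'a \<Rightarrow> bool" where
  "tle K k l \<longleftrightarrow> tvee K {k, l} = l"

definition bullet :: "('a, 'z) ida_scheme \<Rightarrow> 'a \<Rightarrow> 'a \<Rightarrow> 'a" where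
  "bullet K k v = ida_neg K (ida_neg K (ida_mult K k v))"

definition tequiv :: "('a, 'z) ida_scheme \<Rightarrow> 'a \<Rightarrow> 'a \<Rightarrow> bool" where
  "tequiv K k l \<longleftrightarrow> (\<forall>w\<in>ida_tests K. bullet K k w = bullet K l w)"

record 'a oml =
  oml_carrier :: "'a set"
  oml_le :: "'a \<Rightarrow> 'a \<Rightarrow> bool"
  oml_perp :: "'a \<Rightarrow> 'a"

definition tests_oml :: "('a, 'z) ida_scheme \<Rightarrow> 'a oml" where
  "tests_oml K = \<lparr>oml_carrier = ida_tests K, oml_le = tle K, oml_perp = ida_neg K\<rparr>"

definition oml_is_lub :: "'a oml \<Rightarrow> 'a set \<Rightarrow> 'a \<Rightarrow> bool" where
  "oml_is_lub M S x \<longleftrightarrow> x \<in> oml_carrier M \<and> (\<forall>s\<in>S. oml_le M s x) \<and>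
     (\<forall>u\<in>oml_carrier M. (\<forall>s\<in>S. oml_le M s u) \<longrightarrow> oml_le M x u)"

definition oml_is_glb :: "'a oml \<Rightarrow> 'a set \<Rightarrow> 'a \<Rightarrow> bool" where
  "oml_is_glb M S x \<longleftrightarrow> x \<in> oml_carrier M \<and> (\<forall>s\<in>S. oml_le M x s) \<and>
     (\<forall>u\<in>oml_carrier M. (\<forall>s\<in>S. oml_le M u s) \<longrightarrow> oml_le M u x)"

definition oml_Sup :: "'a oml \<Rightarrow> 'a set \<Rightarrow> 'a" where
  "oml_Sup M S = (THE x. oml_is_lub M S x)"

definition oml_Inf :: "'a oml \<Rightarrow> 'a set \<Rightarrow> 'a" where
  "oml_Inf M S = (THE x. oml_is_glb M S x)"

definition oml_join :: "'a oml \<Rightarrow> 'a \<Rightarrow> 'a \<Rightarrow> 'a" where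
  "oml_join M x y = oml_Sup M {x, y}"

definition oml_meet :: "'a oml \<Rightarrow> 'a \<Rightarrow> 'a \<Rightarrow> 'a" where
  "oml_meet M x y = oml_Inf M {x, y}"

definition oml_top :: "'a oml \<Rightarrow> 'a" where
  "oml_top M = oml_Sup M (oml_carrier M)"

definition oml_bot :: "'a oml \<Rightarrow> 'a" where
  "oml_bot M = oml_Sup M {}"

definition complete_oml :: "'a oml \<Rightarrow> bool" where
  "complete_oml M \<longleftrightarrow>
    (let C = oml_carrier M; le = oml_le M; p = oml_perp M in
      (\<forall>x\<in>C. le x x) \<and> (\<forall>x\<in>C. \<forall>y\<in>C. le x y \<and> le y x \<longrightarrow> x = y) \<and>
      (\<forall>x\<in>C. \<forall>y\<in>C. \<forall>z\<in>C. le x y \<and> le y z \<longrightarrow> le x z) \<and>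
      (\<forall>S\<subseteq>C. \<exists>x. oml_is_lub M S x) \<and>
      (\<forall>x\<in>C. p x \<in> C) \<and> (\<forall>x\<in>C. p (p x) = x) \<and>
      (\<forall>x\<in>C. \<forall>y\<in>C. le x y \<longrightarrow> le (p y) (p x)) \<and>
      (\<forall>x\<in>C. oml_join M x (p x) = oml_top M \<and> oml_meet M x (p x) = oml_bot M) \<and>
      (\<forall>x\<in>C. \<forall>y\<in>C. le x y \<longrightarrow> y = oml_join M x (oml_meet M (p x) y)))"

text \<open>Maps on the carrier of M are represented extensionally (value undefined outside).\<close>

definition lin_adjoint :: "'a oml \<Rightarrow> ('a \<Rightarrow> 'a) \<Rightarrow> ('a \<Rightarrow> 'a) \<Rightarrow> bool" where
  "lin_adjoint M f g \<longleftrightarrow> (\<forall>x\<in>oml_carrier M. \<forall>y\<in>oml_carrier M.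
      oml_le M (f x) (oml_perp M y) \<longleftrightarrow> oml_le M x (oml_perp M (g y)))"

definition lin_maps :: "'a oml \<Rightarrow> ('a \<Rightarrow> 'a) set" where
  "lin_maps M = {f \<in> oml_carrier M \<rightarrow>\<^sub>E oml_carrier M.
      \<exists>g \<in> oml_carrier M \<rightarrow>\<^sub>E oml_carrier M. lin_adjoint M f g}"

definition proj :: "'a oml \<Rightarrow> 'a \<Rightarrow> ('a \<Rightarrow> 'a)" where
  "proj M m = (\<lambda>x\<in>oml_carrier M. oml_meet M m (oml_join M (oml_perp M m) x))"

definition lin_ida :: "'a oml \<Rightarrow> ('a \<Rightarrow> 'a) ida" where
  "lin_ida M = \<lparr>
     ida_carrier = lin_maps M,
     ida_Sup = (\<lambda>F. (\<lambda>x\<in>oml_carrier M. oml_Sup M ((\<lambda>f. f x) ` F))),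
     ida_mult = (\<lambda>f g. (\<lambda>x\<in>oml_carrier M. f (g x))),
     ida_inv = (\<lambda>f. THE g. g \<in> oml_carrier M \<rightarrow>\<^sub>E oml_carrier M \<and> lin_adjoint M f g),
     ida_neg = (\<lambda>f. proj M (oml_perp M (f (oml_top M)))),
     ida_unit = (\<lambda>x\<in>oml_carrier M. x)\<rparr>"

definition pset_ida :: "'a oml \<Rightarrow> ('a \<Rightarrow> 'a) set \<Rightarrow> ('a \<Rightarrow> 'a) set ida" where
  "pset_ida M L = \<lparr>
     ida_carrier = Pow L,
     ida_Sup = Union,
     ida_mult = (\<lambda>A B. {ida_mult (lin_ida M) a b | a b. a \<in> A \<and> b \<in> B}),
     ida_inv = (\<lambda>A. ida_inv (lin_ida M) ` A),
     ida_neg = (\<lambda>A. {proj M (oml_perp M (oml_Sup M ((\<lambda>a. a (oml_top M)) ` A)))}),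
     ida_unit = {ida_unit (lin_ida M)}\<rparr>"

text \<open>The powerset algebra with the boxed operations, built over S = T(K).\<close>

definition hdown :: "('a, 'z) ida_scheme \<Rightarrow> 'a set \<Rightarrow> 'a \<Rightarrow> 'a set" where
  "hdown K S v = {w \<in> S. ida_le K w v}"

definition box_ida :: "('a, 'z) ida_scheme \<Rightarrow> 'a set \<Rightarrow> 'a set ida" where
  "box_ida K S = \<lparr>
     ida_carrier = Pow S,
     ida_Sup = Union,
     ida_mult = (\<lambda>A B. hdown K S (ida_mult K (ida_Sup K A) (ida_Sup K B))),
     ida_inv = (\<lambda>A. hdown K S (ida_inv K (ida_Sup K A))),
     ida_neg = (\<lambda>A. hdown K S (ida_neg K (ida_Sup K A))),
     ida_unit = {ida_unit K}\<rparr>"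

definition ida_hom :: "('a, 'z) ida_scheme \<Rightarrow> ('b, 'y) ida_scheme \<Rightarrow> ('a \<Rightarrow> 'b) \<Rightarrow> bool" where
  "ida_hom A B f \<longleftrightarrow>
     f ` ida_carrier A \<subseteq> ida_carrier B \<and>
     (\<forall>X\<subseteq>ida_carrier A. f (ida_Sup A X) = ida_Sup B (f ` X)) \<and>
     (\<forall>x\<in>ida_carrier A. \<forall>y\<in>ida_carrier A. f (ida_mult A x y) = ida_mult B (f x) (f y)) \<and>
     (\<forall>x\<in>ida_carrier A. f (ida_inv A x) = ida_inv B (f x)) \<and>
     (\<forall>x\<in>ida_carrier A. f (ida_neg A x) = ida_neg B (f x)) \<and>
     f (ida_unit A) = ida_unit B"

definition ida_iso :: "('a, 'z) ida_scheme \<Rightarrow> ('b, 'y) ida_scheme \<Rightarrow> ('a \<Rightarrow> 'b) \<Rightarrow> bool" where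
  "ida_iso A B f \<longleftrightarrow> ida_hom A B f \<and> bij_betw f (ida_carrier A) (ida_carrier B)"

definition inv_submonoid :: "('a, 'z) ida_scheme \<Rightarrow> 'a set \<Rightarrow> bool" where
  "inv_submonoid K S \<longleftrightarrow> S \<subseteq> ida_carrier K \<and> ida_unit K \<in> S \<and>
     (\<forall>x\<in>S. \<forall>y\<in>S. ida_mult K x y \<in> S) \<and> (\<forall>x\<in>S. ida_inv K x \<in> S)"

definition im_iso :: "('a, 'z) ida_scheme \<Rightarrow> 'a set \<Rightarrow> ('b, 'y) ida_scheme \<Rightarrow> 'b set \<Rightarrow> ('a \<Rightarrow> 'b) \<Rightarrow> bool" where
  "im_iso A S B S' f \<longleftrightarrow> bij_betw f S S' \<and>
     (\<forall>x\<in>S. \<forall>y\<in>S. f (ida_mult A x y) = ida_mult B (f x) (f y)) \<and>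
     (\<forall>x\<in>S. f (ida_inv A x) = ida_inv B (f x)) \<and>
     f (ida_unit A) = ida_unit B"

section \<open>Conditions (T1)--(T4), instantiated at given types\<close>

definition T1_at :: "('a ida \<Rightarrow> 'a set) \<Rightarrow> bool" where
  "T1_at T \<longleftrightarrow> (\<forall>K. is_ida K \<longrightarrow> ida_tests K \<subseteq> T K \<and> inv_submonoid K (T K))"

definition T2_at :: "('a ida \<Rightarrow> 'a set) \<Rightarrow> (('a \<Rightarrow> 'a) ida \<Rightarrow> ('a \<Rightarrow> 'a) set) \<Rightarrow> bool" where
  "T2_at T TL \<longleftrightarrow> (\<forall>K. is_ida K \<and> complete_oml (tests_oml K) \<and>
       (\<forall>s\<in>T K. \<forall>t\<in>T K. s = t \<longleftrightarrow> tequiv K s t) \<longrightarrow>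
     im_iso K (T K) (lin_ida (tests_oml K)) (TL (lin_ida (tests_oml K)))
       (\<lambda>k. \<lambda>w\<in>ida_tests K. bullet K k w))"

definition T3_at :: "(('a \<Rightarrow> 'a) ida \<Rightarrow> ('a \<Rightarrow> 'a) set) \<Rightarrow> (('a \<Rightarrow> 'a) set ida \<Rightarrow> ('a \<Rightarrow> 'a) set set) \<Rightarrow> bool" where
  "T3_at TL TP \<longleftrightarrow> (\<forall>M. complete_oml M \<longrightarrow>
     im_iso (lin_ida M) (TL (lin_ida M))
            (pset_ida M (TL (lin_ida M))) (TP (pset_ida M (TL (lin_ida M)))) (\<lambda>f. {f}))"

text \<open>(T4): T(f) is the restriction of f; i.e. every IDA morphism f maps T(A) into T(B).\<close>

definition T4_at :: "('a ida \<Rightarrow> 'a set) \<Rightarrow> ('b ida \<Rightarrow> 'b set) \<Rightarrow> bool" where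
  "T4_at TA TB \<longleftrightarrow> (\<forall>A B f. is_ida A \<and> is_ida B \<and> ida_hom A B f \<longrightarrow> f ` TA A \<subseteq> TB B)"

section \<open>T-based orthomodular dynamic algebras\<close>

definition toda :: "('a ida \<Rightarrow> 'a set) \<Rightarrow> 'a ida \<Rightarrow> bool" where
  "toda T K \<longleftrightarrow> is_ida K \<and>
     complete_oml (tests_oml K) \<and>
     (\<forall>A. T K \<subseteq> A \<and> A \<subseteq> ida_carrier K \<and>
          (\<forall>x\<in>A. \<forall>y\<in>A. ida_mult K x y \<in> A) \<and> (\<forall>x\<in>A. ida_inv K x \<in> A) \<and>
          (\<forall>B\<subseteq>A. ida_Sup K B \<in> A) \<longrightarrow> A = ida_carrier K) \<and>
     (\<forall>S T'. S \<subseteq> T K \<and> T' \<subseteq> T K \<longrightarrow> (ida_Sup K S = ida_Sup K T' \<longleftrightarrow> S = T')) \<and>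
     (\<forall>s\<in>T K. \<forall>t\<in>T K. s = t \<longleftrightarrow> tequiv K s t)"

end

theory Submission imports Defs begin

locale idaK =
  fixes K :: "('a, 'z) ida_scheme"
  assumes ida: "is_ida K"
begin

abbreviation "C \<equiv> ida_carrier K"
abbreviation "J \<equiv> ida_Sup K"
abbreviation "m \<equiv> ida_mult K"
abbreviation "s \<equiv> ida_inv K"
abbreviation "n \<equiv> ida_neg K"
abbreviation "e \<equiv> ida_unit K"
abbreviation "le \<equiv> ida_le K"
abbreviation "W \<equiv> ida_tests K"

lemmas D = ida[unfolded is_ida_def Let_def]
lemmas D1 = D[THEN conjunct1]
lemmas D2 = D[THEN conjunct2, THEN conjunct1]
lemmas D3 = D[THEN conjunct2, THEN conjunct2, THEN conjunct1]
lemmas D4 = D[THEN conjunct2, THEN conjunct2, THEN conjunct2, THEN conjunct1]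
lemmas D5 = D[THEN conjunct2, THEN conjunct2, THEN conjunct2, THEN conjunct2, THEN conjunct1]
lemmas D6 = D[THEN conjunct2, THEN conjunct2, THEN conjunct2, THEN conjunct2, THEN conjunct2, THEN conjunct1]
lemmas D7 = D[THEN conjunct2, THEN conjunct2, THEN conjunct2, THEN conjunct2, THEN conjunct2, THEN conjunct2, THEN conjunct1]
lemmas D8 = D[THEN conjunct2, THEN conjunct2, THEN conjunct2, THEN conjunct2, THEN conjunct2, THEN conjunct2, THEN conjunct2, THEN conjunct1]
lemmas D9 = D[THEN conjunct2, THEN conjunct2, THEN conjunct2, THEN conjunct2, THEN conjunct2, THEN conjunct2, THEN conjunct2, THEN conjunct2, THEN conjunct1]
lemmas D10 = D[THEN conjunct2, THEN conjunct2, THEN conjunct2, THEN conjunct2, THEN conjunct2, THEN conjunct2, THEN conjunct2, THEN conjunct2, THEN conjunct2, THEN conjunct1]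
lemmas D11 = D[THEN conjunct2, THEN conjunct2, THEN conjunct2, THEN conjunct2, THEN conjunct2, THEN conjunct2, THEN conjunct2, THEN conjunct2, THEN conjunct2, THEN conjunct2, THEN conjunct1]
lemmas D12 = D[THEN conjunct2, THEN conjunct2, THEN conjunct2, THEN conjunct2, THEN conjunct2, THEN conjunct2, THEN conjunct2, THEN conjunct2, THEN conjunct2, THEN conjunct2, THEN conjunct2, THEN conjunct1]
lemmas D13 = D[THEN conjunct2, THEN conjunct2, THEN conjunct2, THEN conjunct2, THEN conjunct2, THEN conjunct2, THEN conjunct2, THEN conjunct2, THEN conjunct2, THEN conjunct2, THEN conjunct2, THEN conjunct2, THEN conjunct1]
lemmas D14 = D[THEN conjunct2, THEN conjunct2, THEN conjunct2, THEN conjunct2, THEN conjunct2, THEN conjunct2, THEN conjunct2, THEN conjunct2, THEN conjunct2, THEN conjunct2, THEN conjunct2, THEN conjunct2, THEN conjunct2, THEN conjunct1]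
lemmas D15 = D[THEN conjunct2, THEN conjunct2, THEN conjunct2, THEN conjunct2, THEN conjunct2, THEN conjunct2, THEN conjunct2, THEN conjunct2, THEN conjunct2, THEN conjunct2, THEN conjunct2, THEN conjunct2, THEN conjunct2, THEN conjunct2, THEN conjunct1]
lemmas D16 = D[THEN conjunct2, THEN conjunct2, THEN conjunct2, THEN conjunct2, THEN conjunct2, THEN conjunct2, THEN conjunct2, THEN conjunct2, THEN conjunct2, THEN conjunct2, THEN conjunct2, THEN conjunct2, THEN conjunct2, THEN conjunct2, THEN conjunct2, THEN conjunct1]
lemmas D17 = D[THEN conjunct2, THEN conjunct2, THEN conjunct2, THEN conjunct2, THEN conjunct2, THEN conjunct2, THEN conjunct2, THEN conjunct2, THEN conjunct2, THEN conjunct2, THEN conjunct2, THEN conjunct2, THEN conjunct2, THEN conjunct2, THEN conjunct2, THEN conjunct2, THEN conjunct1]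
lemmas D18 = D[THEN conjunct2, THEN conjunct2, THEN conjunct2, THEN conjunct2, THEN conjunct2, THEN conjunct2, THEN conjunct2, THEN conjunct2, THEN conjunct2, THEN conjunct2, THEN conjunct2, THEN conjunct2, THEN conjunct2, THEN conjunct2, THEN conjunct2, THEN conjunct2, THEN conjunct2, THEN conjunct1]
lemmas D19 = D[THEN conjunct2, THEN conjunct2, THEN conjunct2, THEN conjunct2, THEN conjunct2, THEN conjunct2, THEN conjunct2, THEN conjunct2, THEN conjunct2, THEN conjunct2, THEN conjunct2, THEN conjunct2, THEN conjunct2, THEN conjunct2, THEN conjunct2, THEN conjunct2, THEN conjunct2, THEN conjunct2]

lemma J_cl: "A \<subseteq> C \<Longrightarrow> J A \<in> C" using D1 by blast
lemma m_cl: "x \<in> C \<Longrightarrow> y \<in> C \<Longrightarrow> m x y \<in> C" using D2 by blast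
lemma s_cl: "x \<in> C \<Longrightarrow> s x \<in> C" using D3 by blast
lemma n_cl: "x \<in> C \<Longrightarrow> n x \<in> C" using D4 by blast
lemma e_cl: "e \<in> C" using D5 by blast
lemma le_refl: "x \<in> C \<Longrightarrow> le x x" using D6 by blast
lemma le_antisym: "x \<in> C \<Longrightarrow> y \<in> C \<Longrightarrow> le x y \<Longrightarrow> le y x \<Longrightarrow> x = y" using D7 by blast
lemma le_trans: "x \<in> C \<Longrightarrow> y \<in> C \<Longrightarrow> z \<in> C \<Longrightarrow> le x y \<Longrightarrow> le y z \<Longrightarrow> le x z" using D8 by blast
lemma J_upper: "A \<subseteq> C \<Longrightarrow> a \<in> A \<Longrightarrow> le a (J A)" using D9 by (meson subsetD)
lemma J_least: "A \<subseteq> C \<Longrightarrow> u \<in> C \<Longrightarrow> (\<And>a. a \<in> A \<Longrightarrow> le a u) \<Longrightarrow> le (J A) u" using D9 by (meson subsetD)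
lemma m_assoc: "x \<in> C \<Longrightarrow> y \<in> C \<Longrightarrow> z \<in> C \<Longrightarrow> m (m x y) z = m x (m y z)" using D10 by blast
lemma m_e: "x \<in> C \<Longrightarrow> m e x = x" "x \<in> C \<Longrightarrow> m x e = x" using D11 by blast+
lemma m_J_right: "x \<in> C \<Longrightarrow> A \<subseteq> C \<Longrightarrow> m x (J A) = J ((\<lambda>a. m x a) ` A)" using D12 by blast
lemma m_J_left: "x \<in> C \<Longrightarrow> A \<subseteq> C \<Longrightarrow> m (J A) x = J ((\<lambda>a. m a x) ` A)" using D12 by blast
lemma s_s: "x \<in> C \<Longrightarrow> s (s x) = x" using D13 by blast
lemma s_m: "x \<in> C \<Longrightarrow> y \<in> C \<Longrightarrow> s (m x y) = m (s y) (s x)" using D14 by blast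
lemma s_J: "A \<subseteq> C \<Longrightarrow> s (J A) = J (s ` A)" using D15 by blast
lemma ax1: "x \<in> C \<Longrightarrow> y \<in> C \<Longrightarrow> n (m x (n (n y))) = n (m x y)" using D16 by blast
lemma ax2: "A \<subseteq> C \<Longrightarrow> n (J ((\<lambda>x. n (n x)) ` A)) = n (J A)" using D17 by blast
lemma ax3: "x \<in> C \<Longrightarrow> s (n x) = n x" using D18 by blast
lemma ax4: "x \<in> C \<Longrightarrow> y \<in> C \<Longrightarrow> n (n (m (n (n x)) y)) = n (J {n x, n (J {n x, y})})" using D19 by blast

lemma J_eq: "A \<subseteq> C \<Longrightarrow> x \<in> C \<Longrightarrow> (\<And>a. a \<in> A \<Longrightarrow> le a x) \<Longrightarrow> (\<And>u. u \<in> C \<Longrightarrow> (\<And>a. a \<in> A \<Longrightarrow> le a u) \<Longrightarrow> le x u) \<Longrightarrow> J A = x"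
  by (meson J_cl J_least J_upper le_antisym)

lemma J_single: "x \<in> C \<Longrightarrow> J {x} = x"
  by (rule J_eq) (auto intro: le_refl)

lemma le_def': "le x y \<longleftrightarrow> J {x, y} = y" by (simp add: ida_le_def)

lemma le_J_mono: "A \<subseteq> C \<Longrightarrow> B \<subseteq> C \<Longrightarrow> A \<subseteq> B \<Longrightarrow> le (J A) (J B)"
  by (meson J_cl J_least J_upper subset_iff)

lemma J_Union: "F \<subseteq> Pow C \<Longrightarrow> J (\<Union>F) = J (J ` F)"
proof (rule J_eq)
  assume F: "F \<subseteq> Pow C"
  have JF: "J ` F \<subseteq> C" using F J_cl by blast
  show "\<Union>F \<subseteq> C" using F by blast
  show "J (J ` F) \<in> C" using JF J_cl by blast
  show "le a (J (J ` F))" if aF: "a \<in> \<Union>F" for a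
  proof -
    obtain X where X: "X \<in> F" "a \<in> X" using aF by blast
    have "le a (J X)" using X F J_upper by blast
    moreover have "le (J X) (J (J ` F))" using X JF J_upper by blast
    ultimately show ?thesis using X F JF J_cl le_trans by (meson PowD imageI subsetD)
  qed
  show "le (J (J ` F)) u" if u: "u \<in> C" "\<And>a. a \<in> \<Union>F \<Longrightarrow> le a u" for u
    using JF u F by (intro J_least) (auto intro!: J_least)
qed

lemma J_insert: "S \<subseteq> C \<Longrightarrow> t \<in> C \<Longrightarrow> J {t, J S} = J (insert t S)"
proof -
  assume S: "S \<subseteq> C" and t: "t \<in> C"
  have "J (insert t S) = J (\<Union>{{t}, S})" by simp
  also have "\<dots> = J (J ` {{t}, S})" using S t by (intro J_Union) auto
  also have "\<dots> = J {t, J S}" using t J_single by simp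
  finally show ?thesis by simp
qed

lemma J_bot_le: "x \<in> C \<Longrightarrow> J {J {}, x} = x"
  using J_insert[of "{}" x] J_single by (simp add: insert_commute)

lemma J_pair_family: "S \<subseteq> C \<Longrightarrow> S \<noteq> {} \<Longrightarrow> u \<in> C \<Longrightarrow> J {J S, u} = J ((\<lambda>x. J {x, u}) ` S)"
proof -
  assume S: "S \<subseteq> C" "S \<noteq> {}" and u: "u \<in> C"
  have "J {J S, u} = J (insert u S)" using J_insert[OF S(1) u] by (simp add: insert_commute)
  also have "insert u S = \<Union> ((\<lambda>x. {x, u}) ` S)" using S(2) by auto
  also have "J \<dots> = J (J ` ((\<lambda>x. {x, u}) ` S))" using S u by (intro J_Union) auto
  also have "J ` ((\<lambda>x. {x, u}) ` S) = (\<lambda>x. J {x, u}) ` S" by auto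
  finally show ?thesis .
qed

lemma m_J_J: "A \<subseteq> C \<Longrightarrow> B \<subseteq> C \<Longrightarrow> m (J A) (J B) = J {m a b | a b. a \<in> A \<and> b \<in> B}"
proof -
  assume A: "A \<subseteq> C" and B: "B \<subseteq> C"
  have "m (J A) (J B) = J ((\<lambda>a. m a (J B)) ` A)" using A B J_cl m_J_left by blast
  also have "\<dots> = J ((\<lambda>a. J ((\<lambda>b. m a b) ` B)) ` A)" using A B m_J_right
    by (metis (no_types, lifting) image_cong subsetD)
  also have "\<dots> = J (J ` ((\<lambda>a. (\<lambda>b. m a b) ` B) ` A))" by (simp add: image_image)
  also have "\<dots> = J (\<Union> ((\<lambda>a. (\<lambda>b. m a b) ` B) ` A))" using A B m_cl
    by (intro J_Union[symmetric]) blast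
  also have "\<Union> ((\<lambda>a. (\<lambda>b. m a b) ` B) ` A) = {m a b | a b. a \<in> A \<and> b \<in> B}" by blast
  finally show ?thesis .
qed

lemma nnn: "x \<in> C \<Longrightarrow> n (n (n x)) = n x"
  using ax2[of "{x}"] J_single n_cl by simp

lemma W_C: "W \<subseteq> C" unfolding ida_tests_def using n_cl by blast
lemma nW: "x \<in> C \<Longrightarrow> n x \<in> W" unfolding ida_tests_def by blast
lemma W_nn: "w \<in> W \<Longrightarrow> n (n w) = w" unfolding ida_tests_def using nnn by blast
lemma n_J2: "x \<in> C \<Longrightarrow> y \<in> C \<Longrightarrow> n (J {n (n x), n (n y)}) = n (J {x, y})"
  using ax2[of "{x,y}"] by simp

end

lemmas omlD = complete_oml_def[THEN iffD1, unfolded Let_def]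

lemma oml_antisym: "complete_oml M \<Longrightarrow> x \<in> oml_carrier M \<Longrightarrow> y \<in> oml_carrier M \<Longrightarrow> oml_le M x y \<Longrightarrow> oml_le M y x \<Longrightarrow> x = y"
  using omlD[of M, THEN conjunct2, THEN conjunct1] by blast
lemma oml_perp_cl: "complete_oml M \<Longrightarrow> x \<in> oml_carrier M \<Longrightarrow> oml_perp M x \<in> oml_carrier M"
  using omlD[of M, THEN conjunct2, THEN conjunct2, THEN conjunct2, THEN conjunct2, THEN conjunct1] by blast
lemma oml_perp_anti: "complete_oml M \<Longrightarrow> x \<in> oml_carrier M \<Longrightarrow> y \<in> oml_carrier M \<Longrightarrow> oml_le M x y \<Longrightarrow> oml_le M (oml_perp M y) (oml_perp M x)"
  using omlD[of M, THEN conjunct2, THEN conjunct2, THEN conjunct2, THEN conjunct2, THEN conjunct2, THEN conjunct2, THEN conjunct1] by blast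
lemma oml_join_perp: "complete_oml M \<Longrightarrow> x \<in> oml_carrier M \<Longrightarrow> oml_join M x (oml_perp M x) = oml_top M"
  using omlD[of M, THEN conjunct2, THEN conjunct2, THEN conjunct2, THEN conjunct2, THEN conjunct2, THEN conjunct2, THEN conjunct2, THEN conjunct1] by blast

lemma lub_unique: "complete_oml M \<Longrightarrow> oml_is_lub M S x \<Longrightarrow> oml_is_lub M S y \<Longrightarrow> x = y"
proof -
  assume c: "complete_oml M" and x: "oml_is_lub M S x" and y: "oml_is_lub M S y"
  have "oml_le M x y" using x y unfolding oml_is_lub_def by blast
  moreover have "oml_le M y x" using x y unfolding oml_is_lub_def by blast
  moreover have "x \<in> oml_carrier M" "y \<in> oml_carrier M" using x y unfolding oml_is_lub_def by blast+
  ultimately show ?thesis using oml_antisym[OF c] by blast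
qed

lemma glb_unique: "complete_oml M \<Longrightarrow> oml_is_glb M S x \<Longrightarrow> oml_is_glb M S y \<Longrightarrow> x = y"
proof -
  assume c: "complete_oml M" and x: "oml_is_glb M S x" and y: "oml_is_glb M S y"
  have "oml_le M x y" using x y unfolding oml_is_glb_def by blast
  moreover have "oml_le M y x" using x y unfolding oml_is_glb_def by blast
  moreover have "x \<in> oml_carrier M" "y \<in> oml_carrier M" using x y unfolding oml_is_glb_def by blast+
  ultimately show ?thesis using oml_antisym[OF c] by blast
qed

lemma oml_SupI: "complete_oml M \<Longrightarrow> oml_is_lub M S x \<Longrightarrow> oml_Sup M S = x"
  unfolding oml_Sup_def by (rule the_equality) (assumption, rule lub_unique[symmetric], assumption+)

lemma oml_InfI: "complete_oml M \<Longrightarrow> oml_is_glb M S x \<Longrightarrow> oml_Inf M S = x"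
  unfolding oml_Inf_def by (rule the_equality) (assumption, rule glb_unique[symmetric], assumption+)

lemma tests_oml_simps[simp]: "oml_carrier (tests_oml K) = ida_tests K" "oml_le (tests_oml K) = tle K"
  "oml_perp (tests_oml K) = ida_neg K"
  by (simp_all add: tests_oml_def)

context idaK begin

lemma tle_iff: "tle K a b \<longleftrightarrow> n (n (J {a, b})) = b" by (simp add: tle_def tvee_def)

lemma tvee_W: "W' \<subseteq> C \<Longrightarrow> tvee K W' \<in> W"
  unfolding tvee_def by (intro nW n_cl J_cl)

lemma tvee_lub: "W' \<subseteq> W \<Longrightarrow> oml_is_lub (tests_oml K) W' (tvee K W')"
proof -
  assume W': "W' \<subseteq> W"
  have W'C: "W' \<subseteq> C" using W' W_C by blast
  have JC: "J W' \<in> C" using W'C J_cl by blast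
  have 1: "tvee K W' \<in> W" using tvee_W W'C .
  have 2: "tle K a (tvee K W')" if a: "a \<in> W'" for a
  proof -
    have aC: "a \<in> C" using a W'C by blast
    have "n (J {a, n (n (J W'))}) = n (J {n (n a), n (n (J W'))})" using a W' W_nn by auto
    also have "\<dots> = n (J {a, J W'})" using n_J2 aC JC by blast
    also have "J {a, J W'} = J W'" using J_upper[OF W'C a] le_def' by simp
    finally show ?thesis unfolding tle_iff tvee_def by simp
  qed
  have 3: "tle K (tvee K W') u" if u: "u \<in> W" "\<And>a. a \<in> W' \<Longrightarrow> tle K a u" for u
  proof -
    have uC: "u \<in> C" using u W_C by blast
    have key: "n (J {J W', u}) = n u"
    proof (cases "W' = {}")
      case True then show ?thesis using J_bot_le uC by simp
    next
      case False
      have "n (J {J W', u}) = n (J ((\<lambda>x. J {x, u}) ` W'))" using J_pair_family[OF W'C False uC] by simp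
      also have "\<dots> = n (J ((\<lambda>x. n (n x)) ` ((\<lambda>x. J {x, u}) ` W')))"
        using W'C uC J_cl by (intro ax2[symmetric]) auto
      also have "(\<lambda>x. n (n x)) ` ((\<lambda>x. J {x, u}) ` W') = (\<lambda>x. u) ` W'"
        unfolding image_image using u(2) unfolding tle_iff by simp
      also have "\<dots> = {u}" using False by auto
      finally show ?thesis using J_single uC by simp
    qed
    have "n (J {n (n (J W')), u}) = n (J {n (n (J W')), n (n u)})" using W_nn u by simp
    also have "\<dots> = n (J {J W', u})" using n_J2 JC uC by blast
    finally show ?thesis unfolding tle_iff tvee_def using key W_nn u(1) by simp
  qed
  show ?thesis unfolding oml_is_lub_def using 1 2 3 by simp
qed

lemma n_bot: "n (J {}) = n (n e)"
proof -
  define z where "z = n (n (J {}))"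
  have JC: "J {} \<in> C" using J_cl by blast
  have zC: "z \<in> C" unfolding z_def using JC n_cl by blast
  have nnz: "n (n z) = z" unfolding z_def using nnn JC n_cl by metis
  have a: "n (n (m (n (n (n z))) e)) = n (J {n (n z), n (J {n (n z), e})})"
    using ax4[of "n z" e] zC n_cl e_cl by blast
  have "n (n (n z)) = n z" using nnn zC by blast
  then have l: "n (n (m (n (n (n z))) e)) = n z" using m_e(2) zC n_cl by simp
  have "n (J {z, e}) = n (J {n (n z), n (n e)})" using n_J2[OF zC e_cl] by simp
  also have "\<dots> = n (J {n (n (J {})), n (n e)})" unfolding nnz unfolding z_def ..
  also have "\<dots> = n e" using n_J2[OF JC e_cl] J_bot_le e_cl by simp
  finally have b: "n (J {z, e}) = n e" .
  have "n (J {z, n e}) = n (J {n (n (J {})), n (n (n e))})" unfolding z_def using nnn e_cl by simp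
  also have "\<dots> = n (n e)" using n_J2[OF JC n_cl[OF e_cl]] J_bot_le n_cl e_cl by simp
  finally have c: "n (J {z, n e}) = n (n e)" .
  have "n z = n (n e)" using a l nnz b c by simp
  then show ?thesis unfolding z_def using nnn JC by simp
qed

end

locale idaO = idaK +
  assumes oml: "complete_oml (tests_oml K)"
begin

abbreviation "MM \<equiv> tests_oml K"

lemma oSup: "W' \<subseteq> W \<Longrightarrow> oml_Sup MM W' = n (n (J W'))"
  using oml_SupI[OF oml tvee_lub] unfolding tvee_def by blast

lemma ojoin: "a \<in> W \<Longrightarrow> b \<in> W \<Longrightarrow> oml_join MM a b = n (n (J {a, b}))"
  unfolding oml_join_def by (rule oSup) auto

lemma otop: "oml_top MM = n (n e)"
proof -
  have bot: "oml_bot MM = n (n (J {}))" unfolding oml_bot_def by (rule oSup) auto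
  have JC: "J {} \<in> C" using J_cl by blast
  have bW: "n (n (J {})) \<in> W" using nW n_cl JC by blast
  have nbW: "n (n (n (J {}))) \<in> W" using nW n_cl JC by blast
  have "oml_top MM = oml_join MM (oml_bot MM) (n (oml_bot MM))"
    using oml_join_perp[OF oml, of "oml_bot MM"] bot bW by simp
  also have "\<dots> = n (n (J {n (n (J {})), n (n (n (J {})))}))" using ojoin bW nbW bot by simp
  also have "n (J {n (n (J {})), n (n (n (J {})))}) = n (J {n (n (J {})), n (n (n (n (n (J {})))))})"
    using nnn JC n_cl by simp
  also have "\<dots> = n (J {J {}, n (n (n (J {})))})" using n_J2 JC n_cl by blast
  also have "\<dots> = n (n (n (n (J {}))))" using J_bot_le n_cl JC by simp
  finally show ?thesis using nnn n_cl JC n_bot e_cl by simp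
qed

lemma top_W: "oml_top MM \<in> W" using otop nW n_cl e_cl by simp

lemma omeet: "a \<in> W \<Longrightarrow> b \<in> W \<Longrightarrow> oml_meet MM a b = n (J {n a, n b})"
proof -
  assume a: "a \<in> W" and b: "b \<in> W"
  have aC: "a \<in> C" and bC: "b \<in> C" using a b W_C by auto
  have naW: "n a \<in> W" and nbW: "n b \<in> W" using aC bC nW by auto
  define j where "j = tvee K {n a, n b}"
  have lub: "oml_is_lub MM {n a, n b} j" unfolding j_def using naW nbW by (intro tvee_lub) auto
  have jW: "j \<in> W" using lub unfolding oml_is_lub_def by simp
  have nj: "n j = n (J {n a, n b})" unfolding j_def tvee_def using nnn J_cl n_cl aC bC by simp
  have anti: "\<And>x y. x \<in> W \<Longrightarrow> y \<in> W \<Longrightarrow> tle K x y \<Longrightarrow> tle K (n y) (n x)"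
    using oml_perp_anti[OF oml] by simp
  have njW: "n j \<in> W" using jW W_C nW by blast
  have lb: "tle K (n j) x" if x: "x \<in> {a, b}" for x
  proof -
    have xW: "x \<in> W" using x a b by blast
    have "tle K (n x) j" using lub x unfolding oml_is_lub_def by auto
    then have "tle K (n j) (n (n x))" using anti[of "n x" j] xW jW nW W_C by blast
    then show ?thesis using W_nn[OF xW] by simp
  qed
  have gr: "tle K u (n j)" if u: "u \<in> W" "tle K u a" "tle K u b" for u
  proof -
    have 1: "tle K (n a) (n u)" using anti[of u a] u a by blast
    have 2: "tle K (n b) (n u)" using anti[of u b] u b by blast
    have nuW: "n u \<in> W" using u nW W_C by blast
    have "tle K j (n u)" using lub nuW 1 2 unfolding oml_is_lub_def by simp
    then have "tle K (n (n u)) (n j)" using anti[of j "n u"] jW nuW by blast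
    then show ?thesis using W_nn[OF u(1)] by simp
  qed
  have "oml_is_glb MM {a, b} (n j)"
    unfolding oml_is_glb_def using njW lb gr by simp
  then show ?thesis unfolding oml_meet_def using oml_InfI[OF oml] nj by metis
qed

end
context idaO begin
lemma neg_key:
  assumes H: "H \<subseteq> C" and k: "J H = k"
  shows "proj MM (n (oml_Sup MM ((\<lambda>a. n (n (m a (oml_top MM)))) ` H))) = (\<lambda>x\<in>W. n (n (m (n k) x)))"
proof -
  have kC: "k \<in> C" using k H J_cl by blast
  have tC: "oml_top MM \<in> C" using top_W W_C by blast
  have HC: "(\<lambda>a. m a (oml_top MM)) ` H \<subseteq> C" using H tC m_cl by blast
  have X: "(\<lambda>a. n (n (m a (oml_top MM)))) ` H = (\<lambda>x. n (n x)) ` ((\<lambda>a. m a (oml_top MM)) ` H)"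
    by (simp add: image_image)
  have XW: "(\<lambda>a. n (n (m a (oml_top MM)))) ` H \<subseteq> W" using H tC m_cl nW n_cl by blast
  have XC: "(\<lambda>a. n (n (m a (oml_top MM)))) ` H \<subseteq> C" using XW W_C by blast
  have "n (oml_Sup MM ((\<lambda>a. n (n (m a (oml_top MM)))) ` H)) = n (n (n (J ((\<lambda>a. n (n (m a (oml_top MM)))) ` H))))"
    using oSup[OF XW] by simp
  also have "\<dots> = n (J ((\<lambda>a. n (n (m a (oml_top MM)))) ` H))" using nnn[OF J_cl[OF XC]] .
  also have "\<dots> = n (J ((\<lambda>x. n (n x)) ` ((\<lambda>a. m a (oml_top MM)) ` H)))" using X by simp
  also have "\<dots> = n (J ((\<lambda>a. m a (oml_top MM)) ` H))" using ax2 HC by blast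
  also have "\<dots> = n (m k (n (n e)))" using m_J_left[OF tC H] k otop by simp
  also have "\<dots> = n k" using ax1[OF kC e_cl] m_e kC by simp
  finally have p: "n (oml_Sup MM ((\<lambda>a. n (n (m a (oml_top MM)))) ` H)) = n k" .
  show ?thesis unfolding p proj_def tests_oml_simps
  proof (rule restrict_ext)
    fix x assume xW: "x \<in> W"
    have xC: "x \<in> C" using xW W_C by blast
    have nkW: "n k \<in> W" "n (n k) \<in> W" using kC nW n_cl by auto
    have jW: "n (n (J {n (n k), x})) \<in> W" using nW n_cl J_cl kC xC by auto
    have "oml_join MM (oml_perp MM (n k)) x = n (n (J {n (n k), x}))" using ojoin[OF nkW(2) xW] by simp
    then have "oml_meet MM (n k) (oml_join MM (oml_perp MM (n k)) x)
        = n (J {n (n k), n (n (n (J {n (n k), x})))})" using omeet[OF nkW(1) jW] W_nn kC by (simp add: nnn)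
    also have "\<dots> = n (J {n (n k), n (J {n (n k), x})})" using nnn[of "J {n (n k), x}"] J_cl[of "{n (n k), x}"] n_cl kC xC by simp
    also have "\<dots> = n (n (m (n (n (n k))) x))" using ax4[OF n_cl[OF kC] xC] by simp
    also have "\<dots> = n (n (m (n k) x))" using nnn kC by simp
    finally show "oml_meet MM (n k) (oml_join MM (n (n k)) x) = n (n (m (n k) x))" by simp
  qed
qed

end

section \<open>Transport along isomorphisms\<close>

locale ida_tr = A: idaK A for A :: "('a, 'z) ida_scheme" +
  fixes B :: "('b, 'y) ida_scheme" and f :: "'a \<Rightarrow> 'b"
  assumes iso: "ida_iso A B f"
begin

abbreviation "CB \<equiv> ida_carrier B"
abbreviation "JB \<equiv> ida_Sup B"
abbreviation "mB \<equiv> ida_mult B"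
abbreviation "sB \<equiv> ida_inv B"
abbreviation "nB \<equiv> ida_neg B"
abbreviation "eB \<equiv> ida_unit B"
abbreviation "g \<equiv> inv_into A.C f"

lemma bij: "bij_betw f A.C CB" using iso unfolding ida_iso_def by blast
lemma hom: "ida_hom A B f" using iso unfolding ida_iso_def by blast
lemma f_cl: "a \<in> A.C \<Longrightarrow> f a \<in> CB" using bij bij_betwE by blast
lemma g_cl: "x \<in> CB \<Longrightarrow> g x \<in> A.C" using bij by (metis bij_betw_def inv_into_into)
lemma fg: "x \<in> CB \<Longrightarrow> f (g x) = x" using bij by (metis bij_betw_inv_into_right)
lemma gf: "a \<in> A.C \<Longrightarrow> g (f a) = a" using bij by (metis bij_betw_inv_into_left)
lemma f_inj: "a \<in> A.C \<Longrightarrow> b \<in> A.C \<Longrightarrow> f a = f b \<longleftrightarrow> a = b" using bij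
  by (metis bij_betw_inv_into_left)
lemma gX: "X \<subseteq> CB \<Longrightarrow> g ` X \<subseteq> A.C" using g_cl by blast
lemma fgX: "X \<subseteq> CB \<Longrightarrow> f ` (g ` X) = X" proof - assume X: "X \<subseteq> CB" have "\<And>x. x \<in> X \<Longrightarrow> f (g x) = x" using fg X by blast then show ?thesis by (force simp: image_image) qed

lemma fJ: "X \<subseteq> A.C \<Longrightarrow> f (A.J X) = JB (f ` X)" using hom unfolding ida_hom_def by blast
lemma fm: "a \<in> A.C \<Longrightarrow> b \<in> A.C \<Longrightarrow> f (A.m a b) = mB (f a) (f b)" using hom unfolding ida_hom_def by blast
lemma fs: "a \<in> A.C \<Longrightarrow> f (A.s a) = sB (f a)" using hom unfolding ida_hom_def by blast
lemma fn: "a \<in> A.C \<Longrightarrow> f (A.n a) = nB (f a)" using hom unfolding ida_hom_def by blast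
lemma fe: "f A.e = eB" using hom unfolding ida_hom_def by blast

lemma cJ: "X \<subseteq> CB \<Longrightarrow> JB X = f (A.J (g ` X))" using fJ[OF gX] fgX by simp
lemma cm: "x \<in> CB \<Longrightarrow> y \<in> CB \<Longrightarrow> mB x y = f (A.m (g x) (g y))" using fm g_cl fg by simp
lemma cs: "x \<in> CB \<Longrightarrow> sB x = f (A.s (g x))" using fs g_cl fg by simp
lemma cn: "x \<in> CB \<Longrightarrow> nB x = f (A.n (g x))" using fn g_cl fg by simp
lemma ce: "eB = f A.e" using fe by simp

lemma JB_cl: "X \<subseteq> CB \<Longrightarrow> JB X \<in> CB" using cJ gX A.J_cl f_cl by simp
lemma mB_cl: "x \<in> CB \<Longrightarrow> y \<in> CB \<Longrightarrow> mB x y \<in> CB" using cm g_cl A.m_cl f_cl by simp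
lemma sB_cl: "x \<in> CB \<Longrightarrow> sB x \<in> CB" using cs g_cl A.s_cl f_cl by simp
lemma nB_cl: "x \<in> CB \<Longrightarrow> nB x \<in> CB" using cn g_cl A.n_cl f_cl by simp
lemma eB_cl: "eB \<in> CB" using ce A.e_cl f_cl by simp

lemma gJ: "X \<subseteq> CB \<Longrightarrow> g (JB X) = A.J (g ` X)" using cJ gf A.J_cl gX by simp
lemma gm: "x \<in> CB \<Longrightarrow> y \<in> CB \<Longrightarrow> g (mB x y) = A.m (g x) (g y)" using cm gf A.m_cl g_cl by simp
lemma gs: "x \<in> CB \<Longrightarrow> g (sB x) = A.s (g x)" using cs gf A.s_cl g_cl by simp
lemma gn: "x \<in> CB \<Longrightarrow> g (nB x) = A.n (g x)" using cn gf A.n_cl g_cl by simp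
lemma ge: "g eB = A.e" using ce gf A.e_cl by simp

lemma g_inj: "x \<in> CB \<Longrightarrow> y \<in> CB \<Longrightarrow> g x = g y \<longleftrightarrow> x = y" using fg by metis
lemma eqB: "x \<in> CB \<Longrightarrow> y \<in> CB \<Longrightarrow> g x = g y \<Longrightarrow> x = y" using g_inj by blast

lemma leB: "x \<in> CB \<Longrightarrow> y \<in> CB \<Longrightarrow> ida_le B x y \<longleftrightarrow> A.le (g x) (g y)"
proof -
  assume x: "x \<in> CB" and y: "y \<in> CB"
  have "ida_le B x y \<longleftrightarrow> JB {x, y} = y" by (simp add: ida_le_def)
  also have "\<dots> \<longleftrightarrow> g (JB {x, y}) = g y" using g_inj JB_cl x y by simp
  also have "g (JB {x, y}) = A.J {g x, g y}" using gJ x y by simp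
  finally show ?thesis by (simp add: ida_le_def)
qed

lemma is_ida_B: "is_ida B"
  unfolding is_ida_def Let_def
proof (intro conjI ballI allI impI)
  show "JB X \<in> CB" if "X \<subseteq> CB" for X using JB_cl that .
  show "mB x y \<in> CB" if "x \<in> CB" "y \<in> CB" for x y using mB_cl that .
  show "sB x \<in> CB" if "x \<in> CB" for x using sB_cl that .
  show "nB x \<in> CB" if "x \<in> CB" for x using nB_cl that .
  show "eB \<in> CB" using eB_cl .
  show "ida_le B x x" if "x \<in> CB" for x using leB that A.le_refl g_cl by simp
  show "x = y" if "x \<in> CB" "y \<in> CB" "ida_le B x y \<and> ida_le B y x" for x y
    using leB that A.le_antisym g_cl eqB by meson
  show "ida_le B x z" if "x \<in> CB" "y \<in> CB" "z \<in> CB" "ida_le B x y \<and> ida_le B y z" for x y z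
    using leB that A.le_trans g_cl by meson
  show "ida_le B a (JB X)" if X: "X \<subseteq> CB" and a: "a \<in> X" for X a
  proof -
    have "A.le (g a) (A.J (g ` X))" using A.J_upper gX X a by blast
    moreover have "a \<in> CB" using X a by blast
    ultimately show ?thesis using leB[of a "JB X"] JB_cl[OF X] gJ[OF X] by simp
  qed
  show "ida_le B (JB X) u" if X: "X \<subseteq> CB" and u: "u \<in> CB" "\<forall>a\<in>X. ida_le B a u" for X u
  proof -
    have "A.le (A.J (g ` X)) (g u)"
    proof (rule A.J_least[OF gX[OF X] g_cl[OF u(1)]])
      fix b assume "b \<in> g ` X"
      then obtain a where a: "a \<in> X" "b = g a" by blast
      then have "a \<in> CB" using X by blast
      then show "A.le b (g u)" using leB[of a u] u a by simp
    qed
    then show ?thesis using leB[of "JB X" u] JB_cl[OF X] gJ[OF X] u by simp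
  qed
  show "mB (mB x y) z = mB x (mB y z)" if "x \<in> CB" "y \<in> CB" "z \<in> CB" for x y z
    using that by (intro eqB) (simp_all add: mB_cl gm A.m_assoc g_cl)
  show "mB eB x = x" if "x \<in> CB" for x
    using that by (intro eqB) (simp_all add: mB_cl eB_cl gm ge A.m_e g_cl)
  show "mB x eB = x" if "x \<in> CB" for x
    using that by (intro eqB) (simp_all add: mB_cl eB_cl gm ge A.m_e g_cl)
  show "mB x (JB X) = JB ((\<lambda>a. mB x a) ` X)" if x: "x \<in> CB" and X: "X \<subseteq> CB" for x X
  proof (rule eqB)
    have im: "(\<lambda>a. mB x a) ` X \<subseteq> CB" using mB_cl x X by blast
    show "mB x (JB X) \<in> CB" using mB_cl JB_cl x X by blast
    show "JB ((\<lambda>a. mB x a) ` X) \<in> CB" using JB_cl im by blast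
    have "g ` ((\<lambda>a. mB x a) ` X) = (\<lambda>a. A.m (g x) a) ` (g ` X)"
      using gm x X by (auto simp: image_image subset_iff)
    then show "g (mB x (JB X)) = g (JB ((\<lambda>a. mB x a) ` X))"
      using gm gJ x X im JB_cl A.m_J_right g_cl gX by simp
  qed
  show "mB (JB X) x = JB ((\<lambda>a. mB a x) ` X)" if x: "x \<in> CB" and X: "X \<subseteq> CB" for x X
  proof (rule eqB)
    have im: "(\<lambda>a. mB a x) ` X \<subseteq> CB" using mB_cl x X by blast
    show "mB (JB X) x \<in> CB" using mB_cl JB_cl x X by blast
    show "JB ((\<lambda>a. mB a x) ` X) \<in> CB" using JB_cl im by blast
    have "g ` ((\<lambda>a. mB a x) ` X) = (\<lambda>a. A.m a (g x)) ` (g ` X)"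
      using gm x X by (auto simp: image_image subset_iff)
    then show "g (mB (JB X) x) = g (JB ((\<lambda>a. mB a x) ` X))"
      using gm gJ x X im JB_cl A.m_J_left g_cl gX by simp
  qed
  show "sB (sB x) = x" if "x \<in> CB" for x
    using that by (intro eqB) (simp_all add: sB_cl gs A.s_s g_cl)
  show "sB (mB x y) = mB (sB y) (sB x)" if "x \<in> CB" "y \<in> CB" for x y
    using that by (intro eqB) (simp_all add: sB_cl mB_cl gs gm A.s_m g_cl)
  show "sB (JB X) = JB (sB ` X)" if X: "X \<subseteq> CB" for X
  proof (rule eqB)
    have im: "sB ` X \<subseteq> CB" using sB_cl X by blast
    show "sB (JB X) \<in> CB" using sB_cl JB_cl X by blast
    show "JB (sB ` X) \<in> CB" using JB_cl im by blast
    have "g ` (sB ` X) = A.s ` (g ` X)"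
      using gs X by (auto simp: image_image subset_iff)
    then show "g (sB (JB X)) = g (JB (sB ` X))"
      using gs gJ X im JB_cl A.s_J g_cl gX by simp
  qed
  show "nB (mB x (nB (nB y))) = nB (mB x y)" if "x \<in> CB" "y \<in> CB" for x y
    using that by (intro eqB) (simp_all add: nB_cl mB_cl gn gm A.ax1 g_cl)
  show "nB (JB ((\<lambda>x. nB (nB x)) ` X)) = nB (JB X)" if X: "X \<subseteq> CB" for X
  proof (rule eqB)
    have im: "(\<lambda>x. nB (nB x)) ` X \<subseteq> CB" using nB_cl X by blast
    show "nB (JB ((\<lambda>x. nB (nB x)) ` X)) \<in> CB" using nB_cl JB_cl im by blast
    show "nB (JB X) \<in> CB" using nB_cl JB_cl X by blast
    have "g ` ((\<lambda>x. nB (nB x)) ` X) = (\<lambda>x. A.n (A.n x)) ` (g ` X)"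
      using gn nB_cl X by (auto simp: image_image subset_iff)
    then show "g (nB (JB ((\<lambda>x. nB (nB x)) ` X))) = g (nB (JB X))"
      using gn gJ X im JB_cl A.ax2 g_cl gX by simp
  qed
  show "sB (nB x) = nB x" if "x \<in> CB" for x
    using that by (intro eqB) (simp_all add: nB_cl sB_cl gs gn A.ax3 g_cl)
  show "nB (nB (mB (nB (nB x)) y)) = nB (JB {nB x, nB (JB {nB x, y})})" if "x \<in> CB" "y \<in> CB" for x y
    using that by (intro eqB) (simp_all add: nB_cl mB_cl JB_cl gn gm gJ A.ax4 g_cl)
qed

end


lemma oml_refl: "complete_oml M \<Longrightarrow> x \<in> oml_carrier M \<Longrightarrow> oml_le M x x"
  using omlD[of M, THEN conjunct1] by blast
lemma oml_trans: "complete_oml M \<Longrightarrow> x \<in> oml_carrier M \<Longrightarrow> y \<in> oml_carrier M \<Longrightarrow> z \<in> oml_carrier M \<Longrightarrow> oml_le M x y \<Longrightarrow> oml_le M y z \<Longrightarrow> oml_le M x z"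
  using omlD[of M, THEN conjunct2, THEN conjunct2, THEN conjunct1] by blast
lemma oml_lub_ex: "complete_oml M \<Longrightarrow> S \<subseteq> oml_carrier M \<Longrightarrow> \<exists>x. oml_is_lub M S x"
  using omlD[of M, THEN conjunct2, THEN conjunct2, THEN conjunct2, THEN conjunct1] by blast
lemma oml_pp: "complete_oml M \<Longrightarrow> x \<in> oml_carrier M \<Longrightarrow> oml_perp M (oml_perp M x) = x"
  using omlD[of M, THEN conjunct2, THEN conjunct2, THEN conjunct2, THEN conjunct2, THEN conjunct2, THEN conjunct1] by blast
lemma oml_meet_perp: "complete_oml M \<Longrightarrow> x \<in> oml_carrier M \<Longrightarrow> oml_meet M x (oml_perp M x) = oml_bot M"
  using omlD[of M, THEN conjunct2, THEN conjunct2, THEN conjunct2, THEN conjunct2, THEN conjunct2, THEN conjunct2, THEN conjunct2, THEN conjunct1] by blast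
lemma oml_om: "complete_oml M \<Longrightarrow> x \<in> oml_carrier M \<Longrightarrow> y \<in> oml_carrier M \<Longrightarrow> oml_le M x y \<Longrightarrow> y = oml_join M x (oml_meet M (oml_perp M x) y)"
  using omlD[of M, THEN conjunct2, THEN conjunct2, THEN conjunct2, THEN conjunct2, THEN conjunct2, THEN conjunct2, THEN conjunct2, THEN conjunct2] by blast

lemma oml_glb_ex: "complete_oml M \<Longrightarrow> S \<subseteq> oml_carrier M \<Longrightarrow> \<exists>x. oml_is_glb M S x"
proof -
  assume c: "complete_oml M" and S: "S \<subseteq> oml_carrier M"
  define L where "L = {u \<in> oml_carrier M. \<forall>s\<in>S. oml_le M u s}"
  obtain x where x: "oml_is_lub M L x" using oml_lub_ex[OF c, of L] unfolding L_def by blast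
  have "oml_is_glb M S x" unfolding oml_is_glb_def
  proof (intro conjI ballI impI)
    show "x \<in> oml_carrier M" using x unfolding oml_is_lub_def by blast
    show "oml_le M x s" if "s \<in> S" for s
      using x that S unfolding oml_is_lub_def L_def by blast
    show "oml_le M u x" if "u \<in> oml_carrier M" "\<forall>s\<in>S. oml_le M u s" for u
      using x that unfolding oml_is_lub_def L_def by blast
  qed
  then show ?thesis by blast
qed

definition oml_asym :: "'a oml \<Rightarrow> bool" where
  "oml_asym M \<longleftrightarrow> (\<forall>x\<in>oml_carrier M. \<forall>y\<in>oml_carrier M. oml_le M x y \<longrightarrow> oml_le M y x \<longrightarrow> x = y)"

lemma SupI_gen: "oml_asym M \<Longrightarrow> oml_is_lub M S x \<Longrightarrow> oml_Sup M S = x"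
proof -
  assume a: "oml_asym M" and x: "oml_is_lub M S x"
  have u: "y = x" if y: "oml_is_lub M S y" for y
  proof -
    have "oml_le M x y" "oml_le M y x" using x y unfolding oml_is_lub_def by blast+
    moreover have "x \<in> oml_carrier M" "y \<in> oml_carrier M" using x y unfolding oml_is_lub_def by blast+
    ultimately show ?thesis using a unfolding oml_asym_def by blast
  qed
  show ?thesis unfolding oml_Sup_def by (rule the_equality) (rule x, rule u)
qed

lemma InfI_gen: "oml_asym M \<Longrightarrow> oml_is_glb M S x \<Longrightarrow> oml_Inf M S = x"
proof -
  assume a: "oml_asym M" and x: "oml_is_glb M S x"
  have u: "y = x" if y: "oml_is_glb M S y" for y
  proof -
    have "oml_le M x y" "oml_le M y x" using x y unfolding oml_is_glb_def by blast+
    moreover have "x \<in> oml_carrier M" "y \<in> oml_carrier M" using x y unfolding oml_is_glb_def by blast+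
    ultimately show ?thesis using a unfolding oml_asym_def by blast
  qed
  show ?thesis unfolding oml_Inf_def by (rule the_equality) (rule x, rule u)
qed

lemma oml_antisymI: "complete_oml M \<Longrightarrow> oml_asym M"
  unfolding oml_asym_def by (metis oml_antisym)

locale oml_tr =
  fixes M :: "'a oml" and N :: "'b oml" and \<phi> :: "'a \<Rightarrow> 'b"
  assumes M: "complete_oml M"
    and bij: "bij_betw \<phi> (oml_carrier M) (oml_carrier N)"
    and le: "\<And>x y. x \<in> oml_carrier M \<Longrightarrow> y \<in> oml_carrier M \<Longrightarrow> oml_le N (\<phi> x) (\<phi> y) \<longleftrightarrow> oml_le M x y"
    and pp: "\<And>x. x \<in> oml_carrier M \<Longrightarrow> oml_perp N (\<phi> x) = \<phi> (oml_perp M x)"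
begin

abbreviation "CM \<equiv> oml_carrier M"
abbreviation "CN \<equiv> oml_carrier N"

lemma phi_cl: "x \<in> CM \<Longrightarrow> \<phi> x \<in> CN" using bij bij_betwE by blast
lemma CN_eq: "CN = \<phi> ` CM" using bij by (simp add: bij_betw_def)
lemma phi_inj: "x \<in> CM \<Longrightarrow> y \<in> CM \<Longrightarrow> \<phi> x = \<phi> y \<longleftrightarrow> x = y"
  using bij by (metis bij_betw_def inj_on_def)
lemma CN_cases: "y \<in> CN \<Longrightarrow> (\<And>x. x \<in> CM \<Longrightarrow> y = \<phi> x \<Longrightarrow> P) \<Longrightarrow> P" using CN_eq by blast

lemma antisymN: "oml_asym N"
  unfolding oml_asym_def
proof (intro ballI impI)
  fix a b assume a: "a \<in> CN" and b: "b \<in> CN" and ab: "oml_le N a b" "oml_le N b a"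
  obtain x y where x: "x \<in> CM" "a = \<phi> x" and y: "y \<in> CM" "b = \<phi> y" using a b CN_cases by metis
  show "a = b" using ab x y le oml_antisym[OF M] by metis
qed

lemma lub_tr: "S \<subseteq> CM \<Longrightarrow> x \<in> CM \<Longrightarrow> oml_is_lub N (\<phi> ` S) (\<phi> x) \<longleftrightarrow> oml_is_lub M S x"
proof -
  assume S: "S \<subseteq> CM" and x: "x \<in> CM"
  have 1: "(\<forall>s\<in>\<phi> ` S. oml_le N s (\<phi> x)) \<longleftrightarrow> (\<forall>s\<in>S. oml_le M s x)" using S x le by auto
  have 2: "(\<forall>u\<in>CN. (\<forall>s\<in>\<phi> ` S. oml_le N s u) \<longrightarrow> oml_le N (\<phi> x) u) \<longleftrightarrow>
           (\<forall>u\<in>CM. (\<forall>s\<in>S. oml_le M s u) \<longrightarrow> oml_le M x u)"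
  proof
    assume h: "\<forall>u\<in>CN. (\<forall>s\<in>\<phi> ` S. oml_le N s u) \<longrightarrow> oml_le N (\<phi> x) u"
    show "\<forall>u\<in>CM. (\<forall>s\<in>S. oml_le M s u) \<longrightarrow> oml_le M x u"
    proof (intro ballI impI)
      fix u assume u: "u \<in> CM" "\<forall>s\<in>S. oml_le M s u"
      have "\<forall>s\<in>\<phi> ` S. oml_le N s (\<phi> u)" using u S le by auto
      then have "oml_le N (\<phi> x) (\<phi> u)" using h phi_cl u by blast
      then show "oml_le M x u" using le x u by blast
    qed
  next
    assume h: "\<forall>u\<in>CM. (\<forall>s\<in>S. oml_le M s u) \<longrightarrow> oml_le M x u"
    show "\<forall>u\<in>CN. (\<forall>s\<in>\<phi> ` S. oml_le N s u) \<longrightarrow> oml_le N (\<phi> x) u"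
    proof (intro ballI impI)
      fix u assume u: "u \<in> CN" "\<forall>s\<in>\<phi> ` S. oml_le N s u"
      obtain v where v: "v \<in> CM" "u = \<phi> v" using u CN_cases by metis
      have "\<forall>s\<in>S. oml_le M s v" using u v S le by auto
      then have "oml_le M x v" using h v by blast
      then show "oml_le N (\<phi> x) u" using le x v by blast
    qed
  qed
  show ?thesis unfolding oml_is_lub_def using 1 2 x phi_cl by blast
qed

lemma glb_tr: "S \<subseteq> CM \<Longrightarrow> x \<in> CM \<Longrightarrow> oml_is_glb N (\<phi> ` S) (\<phi> x) \<longleftrightarrow> oml_is_glb M S x"
proof -
  assume S: "S \<subseteq> CM" and x: "x \<in> CM"
  have 1: "(\<forall>s\<in>\<phi> ` S. oml_le N (\<phi> x) s) \<longleftrightarrow> (\<forall>s\<in>S. oml_le M x s)" using S x le by auto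
  have 2: "(\<forall>u\<in>CN. (\<forall>s\<in>\<phi> ` S. oml_le N u s) \<longrightarrow> oml_le N u (\<phi> x)) \<longleftrightarrow>
           (\<forall>u\<in>CM. (\<forall>s\<in>S. oml_le M u s) \<longrightarrow> oml_le M u x)"
  proof
    assume h: "\<forall>u\<in>CN. (\<forall>s\<in>\<phi> ` S. oml_le N u s) \<longrightarrow> oml_le N u (\<phi> x)"
    show "\<forall>u\<in>CM. (\<forall>s\<in>S. oml_le M u s) \<longrightarrow> oml_le M u x"
    proof (intro ballI impI)
      fix u assume u: "u \<in> CM" "\<forall>s\<in>S. oml_le M u s"
      have "\<forall>s\<in>\<phi> ` S. oml_le N (\<phi> u) s" using u S le by auto
      then have "oml_le N (\<phi> u) (\<phi> x)" using h phi_cl u by blast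
      then show "oml_le M u x" using le x u by blast
    qed
  next
    assume h: "\<forall>u\<in>CM. (\<forall>s\<in>S. oml_le M u s) \<longrightarrow> oml_le M u x"
    show "\<forall>u\<in>CN. (\<forall>s\<in>\<phi> ` S. oml_le N u s) \<longrightarrow> oml_le N u (\<phi> x)"
    proof (intro ballI impI)
      fix u assume u: "u \<in> CN" "\<forall>s\<in>\<phi> ` S. oml_le N u s"
      obtain v where v: "v \<in> CM" "u = \<phi> v" using u CN_cases by metis
      have "\<forall>s\<in>S. oml_le M v s" using u v S le by auto
      then have "oml_le M v x" using h v by blast
      then show "oml_le N u (\<phi> x)" using le x v by blast
    qed
  qed
  show ?thesis unfolding oml_is_glb_def using 1 2 x phi_cl by blast
qed

lemma Sup_tr: "S \<subseteq> CM \<Longrightarrow> oml_Sup N (\<phi> ` S) = \<phi> (oml_Sup M S)"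
proof -
  assume S: "S \<subseteq> CM"
  obtain x where x: "oml_is_lub M S x" using oml_lub_ex[OF M S] by blast
  have xC: "x \<in> CM" using x unfolding oml_is_lub_def by blast
  have "oml_Sup M S = x" using oml_SupI[OF M x] .
  moreover have "oml_Sup N (\<phi> ` S) = \<phi> x" using SupI_gen[OF antisymN] lub_tr[OF S xC] x by blast
  ultimately show ?thesis by simp
qed

lemma Inf_tr: "S \<subseteq> CM \<Longrightarrow> oml_Inf N (\<phi> ` S) = \<phi> (oml_Inf M S)"
proof -
  assume S: "S \<subseteq> CM"
  obtain x where x: "oml_is_glb M S x" using oml_glb_ex[OF M S] by blast
  have xC: "x \<in> CM" using x unfolding oml_is_glb_def by blast
  have "oml_Inf M S = x" using oml_InfI[OF M x] .
  moreover have "oml_Inf N (\<phi> ` S) = \<phi> x" using InfI_gen[OF antisymN] glb_tr[OF S xC] x by blast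
  ultimately show ?thesis by simp
qed

lemma join_tr: "x \<in> CM \<Longrightarrow> y \<in> CM \<Longrightarrow> oml_join N (\<phi> x) (\<phi> y) = \<phi> (oml_join M x y)"
  unfolding oml_join_def using Sup_tr[of "{x, y}"] by simp
lemma meet_tr: "x \<in> CM \<Longrightarrow> y \<in> CM \<Longrightarrow> oml_meet N (\<phi> x) (\<phi> y) = \<phi> (oml_meet M x y)"
  unfolding oml_meet_def using Inf_tr[of "{x, y}"] by simp
lemma top_tr: "oml_top N = \<phi> (oml_top M)"
  unfolding oml_top_def using Sup_tr[of CM] CN_eq by simp
lemma bot_tr: "oml_bot N = \<phi> (oml_bot M)"
  unfolding oml_bot_def using Sup_tr[of "{}"] by simp

lemma join_cl: "x \<in> CM \<Longrightarrow> y \<in> CM \<Longrightarrow> oml_join M x y \<in> CM"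
proof -
  assume "x \<in> CM" "y \<in> CM"
  then obtain z where z: "oml_is_lub M {x, y} z" using oml_lub_ex[OF M, of "{x, y}"] by blast
  then show ?thesis unfolding oml_join_def using oml_SupI[OF M z] unfolding oml_is_lub_def by simp
qed
lemma meet_cl: "x \<in> CM \<Longrightarrow> y \<in> CM \<Longrightarrow> oml_meet M x y \<in> CM"
proof -
  assume "x \<in> CM" "y \<in> CM"
  then obtain z where z: "oml_is_glb M {x, y} z" using oml_glb_ex[OF M, of "{x, y}"] by blast
  then show ?thesis unfolding oml_meet_def using oml_InfI[OF M z] unfolding oml_is_glb_def by simp
qed

lemma complete_N: "complete_oml N"
  unfolding complete_oml_def Let_def
proof (intro conjI ballI allI impI)
  show "oml_le N a a" if "a \<in> CN" for a
    using that by (rule CN_cases) (simp add: le oml_refl[OF M])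
  show "a = b" if "a \<in> CN" "b \<in> CN" "oml_le N a b \<and> oml_le N b a" for a b
    using antisymN that unfolding oml_asym_def by blast
  show "oml_le N a c" if H: "a \<in> CN" "b \<in> CN" "c \<in> CN" "oml_le N a b \<and> oml_le N b c" for a b c
  proof -
    obtain x y z where "x \<in> CM" "a = \<phi> x" "y \<in> CM" "b = \<phi> y" "z \<in> CM" "c = \<phi> z"
      using H(1-3) CN_cases by metis
    then show ?thesis using H(4) le oml_trans[OF M] by metis
  qed
  show "\<exists>x. oml_is_lub N S x" if S: "S \<subseteq> CN" for S
  proof -
    define S0 where "S0 = inv_into CM \<phi> ` S"
    have S0: "S0 \<subseteq> CM" unfolding S0_def using S CN_eq by (auto intro: inv_into_into)
    have SS: "\<phi> ` S0 = S" unfolding S0_def image_image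
    proof -
      have "\<And>y. y \<in> S \<Longrightarrow> \<phi> (inv_into CM \<phi> y) = y" using S CN_eq by (metis f_inv_into_f subsetD)
      then show "(\<lambda>x. \<phi> (inv_into CM \<phi> x)) ` S = S" by simp
    qed
    obtain x where x: "oml_is_lub M S0 x" using oml_lub_ex[OF M S0] by blast
    have "x \<in> CM" using x unfolding oml_is_lub_def by blast
    then have "oml_is_lub N S (\<phi> x)" using lub_tr[OF S0] x SS by blast
    then show ?thesis by blast
  qed
  show "oml_perp N a \<in> CN" if "a \<in> CN" for a
    using that by (rule CN_cases) (simp add: pp phi_cl oml_perp_cl[OF M])
  show "oml_perp N (oml_perp N a) = a" if "a \<in> CN" for a
    using that by (rule CN_cases) (simp add: pp oml_perp_cl[OF M] oml_pp[OF M])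
  show "oml_le N (oml_perp N b) (oml_perp N a)" if H: "a \<in> CN" "b \<in> CN" "oml_le N a b" for a b
  proof -
    obtain x y where "x \<in> CM" "a = \<phi> x" "y \<in> CM" "b = \<phi> y" using H(1,2) CN_cases by metis
    then show ?thesis using H(3) le pp oml_perp_cl[OF M] oml_perp_anti[OF M] by simp
  qed
  show "oml_join N a (oml_perp N a) = oml_top N" if "a \<in> CN" for a
    using that by (rule CN_cases) (simp add: pp oml_perp_cl[OF M] join_tr top_tr oml_join_perp[OF M])
  show "oml_meet N a (oml_perp N a) = oml_bot N" if "a \<in> CN" for a
    using that by (rule CN_cases) (simp add: pp oml_perp_cl[OF M] meet_tr bot_tr oml_meet_perp[OF M])
  show "b = oml_join N a (oml_meet N (oml_perp N a) b)" if H: "a \<in> CN" "b \<in> CN" "oml_le N a b" for a b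
  proof -
    obtain x y where xy: "x \<in> CM" "a = \<phi> x" "y \<in> CM" "b = \<phi> y" using H(1,2) CN_cases by metis
    then have "oml_le M x y" using H(3) le by simp
    then have "y = oml_join M x (oml_meet M (oml_perp M x) y)" using oml_om[OF M] xy by blast
    then show ?thesis using xy pp oml_perp_cl[OF M] meet_tr join_tr meet_cl by metis
  qed
qed

end


lemma hom_comp:
  assumes f: "ida_hom A B f" and h: "ida_hom B D h"
  shows "ida_hom A D (h \<circ> f)"
proof -
  have f1: "f ` ida_carrier A \<subseteq> ida_carrier B"
    and f2: "\<And>X. X \<subseteq> ida_carrier A \<Longrightarrow> f (ida_Sup A X) = ida_Sup B (f ` X)"
    and f3: "\<And>x y. x \<in> ida_carrier A \<Longrightarrow> y \<in> ida_carrier A \<Longrightarrow> f (ida_mult A x y) = ida_mult B (f x) (f y)"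
    and f4: "\<And>x. x \<in> ida_carrier A \<Longrightarrow> f (ida_inv A x) = ida_inv B (f x)"
    and f5: "\<And>x. x \<in> ida_carrier A \<Longrightarrow> f (ida_neg A x) = ida_neg B (f x)"
    and f6: "f (ida_unit A) = ida_unit B"
    using f unfolding ida_hom_def by blast+
  have h1: "h ` ida_carrier B \<subseteq> ida_carrier D"
    and h2: "\<And>X. X \<subseteq> ida_carrier B \<Longrightarrow> h (ida_Sup B X) = ida_Sup D (h ` X)"
    and h3: "\<And>x y. x \<in> ida_carrier B \<Longrightarrow> y \<in> ida_carrier B \<Longrightarrow> h (ida_mult B x y) = ida_mult D (h x) (h y)"
    and h4: "\<And>x. x \<in> ida_carrier B \<Longrightarrow> h (ida_inv B x) = ida_inv D (h x)"
    and h5: "\<And>x. x \<in> ida_carrier B \<Longrightarrow> h (ida_neg B x) = ida_neg D (h x)"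
    and h6: "h (ida_unit B) = ida_unit D"
    using h unfolding ida_hom_def by blast+
  have fc: "\<And>x. x \<in> ida_carrier A \<Longrightarrow> f x \<in> ida_carrier B" using f1 by blast
  show ?thesis unfolding ida_hom_def
  proof (intro conjI ballI allI impI)
    show "(h \<circ> f) ` ida_carrier A \<subseteq> ida_carrier D" using f1 h1 by auto
    show "(h \<circ> f) (ida_Sup A X) = ida_Sup D ((h \<circ> f) ` X)" if X: "X \<subseteq> ida_carrier A" for X
    proof -
      have "f ` X \<subseteq> ida_carrier B" using X fc by blast
      then show ?thesis using f2[OF X] h2 by (simp add: image_comp)
    qed
    show "(h \<circ> f) (ida_mult A x y) = ida_mult D ((h \<circ> f) x) ((h \<circ> f) y)" if "x \<in> ida_carrier A" "y \<in> ida_carrier A" for x y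
      using that f3 h3 fc by simp
    show "(h \<circ> f) (ida_inv A x) = ida_inv D ((h \<circ> f) x)" if "x \<in> ida_carrier A" for x
      using that f4 h4 fc by simp
    show "(h \<circ> f) (ida_neg A x) = ida_neg D ((h \<circ> f) x)" if "x \<in> ida_carrier A" for x
      using that f5 h5 fc by simp
    show "(h \<circ> f) (ida_unit A) = ida_unit D" using f6 h6 by simp
  qed
qed

context ida_tr begin

lemma g_hom: "ida_hom B A g"
  unfolding ida_hom_def
proof (intro conjI ballI allI impI)
  show "g ` CB \<subseteq> A.C" using g_cl by blast
  show "g (JB X) = A.J (g ` X)" if "X \<subseteq> CB" for X using gJ that .
  show "g (mB x y) = A.m (g x) (g y)" if "x \<in> CB" "y \<in> CB" for x y using gm that .
  show "g (sB x) = A.s (g x)" if "x \<in> CB" for x using gs that .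
  show "g (nB x) = A.n (g x)" if "x \<in> CB" for x using gn that .
  show "g eB = A.e" using ge .
qed

lemma g_bij: "bij_betw g CB A.C" using bij by (rule bij_betw_inv_into)

lemma tests_B: "ida_tests B = f ` A.W"
proof -
  have "ida_tests B = nB ` CB" unfolding ida_tests_def ..
  also have "CB = f ` A.C" using bij by (simp add: bij_betw_def)
  also have "nB ` (f ` A.C) = f ` (A.n ` A.C)" using fn by (auto simp: image_image)
  finally show ?thesis unfolding ida_tests_def .
qed

lemma tle_tr: "a \<in> A.C \<Longrightarrow> b \<in> A.C \<Longrightarrow> tle B (f a) (f b) \<longleftrightarrow> tle A a b"
proof -
  assume a: "a \<in> A.C" and b: "b \<in> A.C"
  have ab: "{a, b} \<subseteq> A.C" using a b by blast
  have "nB (nB (JB {f a, f b})) = f (A.n (A.n (A.J {a, b})))"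
    using fJ[OF ab] fn A.n_cl A.J_cl[OF ab] by simp
  then have "tle B (f a) (f b) \<longleftrightarrow> f (A.n (A.n (A.J {a, b}))) = f b" by (simp add: tle_def tvee_def)
  also have "\<dots> \<longleftrightarrow> A.n (A.n (A.J {a, b})) = b" using f_inj A.n_cl A.J_cl[OF ab] b by blast
  finally show ?thesis by (simp add: tle_def tvee_def)
qed

lemma bullet_tr: "a \<in> A.C \<Longrightarrow> w \<in> A.C \<Longrightarrow> bullet B (f a) (f w) = f (bullet A a w)"
  unfolding bullet_def using fm fn A.m_cl A.n_cl by simp

lemma oml_B: "complete_oml (tests_oml A) \<Longrightarrow> complete_oml (tests_oml B)"
proof -
  assume c: "complete_oml (tests_oml A)"
  have inj: "inj_on f A.W" using bij A.W_C unfolding bij_betw_def by (meson inj_on_subset)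
  interpret T: oml_tr "tests_oml A" "tests_oml B" f
  proof
    show "complete_oml (tests_oml A)" using c .
    show "bij_betw f (oml_carrier (tests_oml A)) (oml_carrier (tests_oml B))"
      using inj tests_B by (simp add: bij_betw_def)
    show "oml_le (tests_oml B) (f x) (f y) = oml_le (tests_oml A) x y"
      if "x \<in> oml_carrier (tests_oml A)" "y \<in> oml_carrier (tests_oml A)" for x y
      using that tle_tr A.W_C by auto
    show "oml_perp (tests_oml B) (f x) = f (oml_perp (tests_oml A) x)"
      if "x \<in> oml_carrier (tests_oml A)" for x
      using that fn A.W_C by auto
  qed
  show ?thesis using T.complete_N .
qed

end

lemma iso_inv:
  assumes A: "is_ida A" and iso: "ida_iso A B f"
  shows "ida_iso B A (inv_into (ida_carrier A) f)"
proof -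
  interpret ida_tr A B f using A iso by unfold_locales
  show ?thesis unfolding ida_iso_def using g_hom g_bij by blast
qed

lemma iso_compose:
  assumes A: "is_ida A" and f: "ida_iso A B f" and h: "ida_iso A D h"
  shows "ida_iso B D (h \<circ> inv_into (ida_carrier A) f)"
proof -
  have gi: "ida_iso B A (inv_into (ida_carrier A) f)" using iso_inv A f .
  show ?thesis unfolding ida_iso_def
  proof
    show "ida_hom B D (h \<circ> inv_into (ida_carrier A) f)"
      using hom_comp gi h unfolding ida_iso_def by blast
    show "bij_betw (h \<circ> inv_into (ida_carrier A) f) (ida_carrier B) (ida_carrier D)"
      using gi h unfolding ida_iso_def using bij_betw_trans by blast
  qed
qed

lemma toda_D:
  assumes "toda T K"
  shows "is_ida K" "complete_oml (tests_oml K)"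
    "\<And>A. T K \<subseteq> A \<Longrightarrow> A \<subseteq> ida_carrier K \<Longrightarrow>
          (\<forall>x\<in>A. \<forall>y\<in>A. ida_mult K x y \<in> A) \<Longrightarrow> (\<forall>x\<in>A. ida_inv K x \<in> A) \<Longrightarrow>
          (\<forall>B\<subseteq>A. ida_Sup K B \<in> A) \<Longrightarrow> A = ida_carrier K"
    "\<And>S T'. S \<subseteq> T K \<Longrightarrow> T' \<subseteq> T K \<Longrightarrow> ida_Sup K S = ida_Sup K T' \<longleftrightarrow> S = T'"
    "\<And>s t. s \<in> T K \<Longrightarrow> t \<in> T K \<Longrightarrow> s = t \<longleftrightarrow> tequiv K s t"
  using assms unfolding toda_def by blast+

lemma toda_transfer:
  fixes A :: "'a ida" and B :: "'b ida" and TA :: "'a ida \<Rightarrow> 'a set" and TB :: "'b ida \<Rightarrow> 'b set"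
  assumes tA: "toda TA A" and iso: "ida_iso A B f"
    and T4a: "T4_at TA TB" and T4b: "T4_at TB TA" and T1b: "T1_at TB"
    and T1a: "T1_at TA"
  shows "toda TB B"
proof -
  note D = toda_D[OF tA]
  interpret ida_tr A B f using D(1) iso by unfold_locales
  have iB: "is_ida B" using is_ida_B .
  have TBC: "TB B \<subseteq> CB" using T1b iB unfolding T1_at_def inv_submonoid_def by blast
  have TAC: "TA A \<subseteq> A.C" using T1a D(1) unfolding T1_at_def inv_submonoid_def by blast
  have fT: "f ` TA A \<subseteq> TB B" using T4a D(1) iB hom unfolding T4_at_def by blast
  have gT: "g ` TB B \<subseteq> TA A" using T4b D(1) iB g_hom unfolding T4_at_def by blast
  have TBeq: "TB B = f ` TA A"
  proof
    show "f ` TA A \<subseteq> TB B" using fT .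
    show "TB B \<subseteq> f ` TA A"
    proof
      fix y assume y: "y \<in> TB B"
      then have "y = f (g y)" using fg TBC by auto
      moreover have "g y \<in> TA A" using gT y by blast
      ultimately show "y \<in> f ` TA A" by blast
    qed
  qed
  have gTB: "g ` TB B = TA A" using TBeq gf TAC by (force simp: image_image)
  show ?thesis unfolding toda_def
  proof (intro conjI allI impI ballI)
    show "is_ida B" using iB .
    show "complete_oml (tests_oml B)" using oml_B D(2) by blast
  next
    fix A' assume h: "TB B \<subseteq> A' \<and> A' \<subseteq> CB \<and> (\<forall>x\<in>A'. \<forall>y\<in>A'. mB x y \<in> A') \<and>
       (\<forall>x\<in>A'. sB x \<in> A') \<and> (\<forall>B'\<subseteq>A'. JB B' \<in> A')"
    have hT: "TB B \<subseteq> A'" using h by (rule conjunct1)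
    have A'C: "A' \<subseteq> CB" using h by (rule conjunct1[OF conjunct2])
    have hm: "\<forall>x\<in>A'. \<forall>y\<in>A'. mB x y \<in> A'" using h by (rule conjunct1[OF conjunct2[OF conjunct2]])
    have hs: "\<forall>x\<in>A'. sB x \<in> A'" using h by (rule conjunct1[OF conjunct2[OF conjunct2[OF conjunct2]]])
    have hJ: "\<forall>B'\<subseteq>A'. JB B' \<in> A'" using h by (rule conjunct2[OF conjunct2[OF conjunct2[OF conjunct2]]])
    define A0 where "A0 = g ` A'"
    have "A0 = A.C"
    proof (rule D(3))
      show "TA A \<subseteq> A0" unfolding A0_def using hT gTB by blast
      show "A0 \<subseteq> A.C" unfolding A0_def using A'C g_cl by blast
      show "\<forall>x\<in>A0. \<forall>y\<in>A0. A.m x y \<in> A0"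
      proof (intro ballI)
        fix x y assume "x \<in> A0" "y \<in> A0"
        then obtain x' y' where xy: "x' \<in> A'" "y' \<in> A'" "x = g x'" "y = g y'" unfolding A0_def by blast
        have "mB x' y' \<in> A'" using hm xy by blast
        moreover have "A.m x y = g (mB x' y')" using gm xy A'C by (simp add: subset_iff)
        ultimately show "A.m x y \<in> A0" unfolding A0_def by blast
      qed
      show "\<forall>x\<in>A0. A.s x \<in> A0"
      proof
        fix x assume "x \<in> A0"
        then obtain x' where xy: "x' \<in> A'" "x = g x'" unfolding A0_def by blast
        have "sB x' \<in> A'" using hs xy by blast
        moreover have "A.s x = g (sB x')" using gs xy A'C by (simp add: subset_iff)
        ultimately show "A.s x \<in> A0" unfolding A0_def by blast
      qed
      show "\<forall>B0\<subseteq>A0. A.J B0 \<in> A0"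
      proof (intro allI impI)
        fix B0 assume B0: "B0 \<subseteq> A0"
        have B0C: "B0 \<subseteq> A.C" using B0 A'C g_cl unfolding A0_def by blast
        have fB0: "f ` B0 \<subseteq> A'"
        proof
          fix y assume "y \<in> f ` B0"
          then obtain b where b: "b \<in> B0" "y = f b" by blast
          then obtain x' where "x' \<in> A'" "b = g x'" using B0 unfolding A0_def by blast
          then show "y \<in> A'" using b fg A'C by auto
        qed
        have "JB (f ` B0) \<in> A'" using hJ fB0 by blast
        moreover have "g (JB (f ` B0)) = A.J B0"
          using fJ[OF B0C] gf[OF A.J_cl[OF B0C]] by simp
        ultimately show "A.J B0 \<in> A0" unfolding A0_def by (metis image_eqI)
      qed
    qed
    then have "f ` A0 = CB" using bij by (simp add: bij_betw_def)
    moreover have "f ` A0 = A'" unfolding A0_def using fgX A'C by blast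
    ultimately show "A' = CB" by simp
  next
    fix S T' assume ST: "S \<subseteq> TB B \<and> T' \<subseteq> TB B"
    have SC: "S \<subseteq> CB" "T' \<subseteq> CB" using ST TBC by blast+
    have "JB S = JB T' \<longleftrightarrow> g (JB S) = g (JB T')" using g_inj JB_cl SC by blast
    also have "\<dots> \<longleftrightarrow> A.J (g ` S) = A.J (g ` T')" using gJ SC by simp
    also have "\<dots> \<longleftrightarrow> g ` S = g ` T'"
    proof -
      have "g ` S \<subseteq> TA A" "g ` T' \<subseteq> TA A" using ST gT by blast+
      then show ?thesis by (rule D(4))
    qed
    also have "\<dots> \<longleftrightarrow> S = T'"
    proof
      assume "g ` S = g ` T'"
      then have "f ` g ` S = f ` g ` T'" by simp
      then show "S = T'" using fgX SC by simp
    qed simp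
    finally show "JB S = JB T' \<longleftrightarrow> S = T'" .
  next
    fix s t assume s: "s \<in> TB B" and t: "t \<in> TB B"
    have sC: "s \<in> CB" and tC: "t \<in> CB" using s t TBC by blast+
    have gs': "g s \<in> TA A" and gt': "g t \<in> TA A" using s t gT by blast+
    have "tequiv B s t \<longleftrightarrow> tequiv A (g s) (g t)"
    proof -
      have "tequiv B s t \<longleftrightarrow> (\<forall>w\<in>A.W. bullet B s (f w) = bullet B t (f w))"
        unfolding tequiv_def tests_B by blast
      also have "\<dots> \<longleftrightarrow> (\<forall>w\<in>A.W. bullet A (g s) w = bullet A (g t) w)"
      proof (rule ball_cong[OF refl])
        fix w assume w: "w \<in> A.W"
        have wC: "w \<in> A.C" using w A.W_C by blast
        have 1: "bullet B s (f w) = f (bullet A (g s) w)" using bullet_tr[OF g_cl[OF sC] wC] fg[OF sC] by simp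
        have 2: "bullet B t (f w) = f (bullet A (g t) w)" using bullet_tr[OF g_cl[OF tC] wC] fg[OF tC] by simp
        have 3: "bullet A (g s) w \<in> A.C" unfolding bullet_def
          using A.n_cl[OF A.n_cl[OF A.m_cl[OF g_cl[OF sC] wC]]] .
        have 4: "bullet A (g t) w \<in> A.C" unfolding bullet_def
          using A.n_cl[OF A.n_cl[OF A.m_cl[OF g_cl[OF tC] wC]]] .
        show "bullet B s (f w) = bullet B t (f w) \<longleftrightarrow> bullet A (g s) w = bullet A (g t) w"
          unfolding 1 2 using f_inj[OF 3 4] .
      qed
      finally show ?thesis unfolding tequiv_def by simp
    qed
    moreover have "s = t \<longleftrightarrow> g s = g t" using g_inj sC tC by blast
    moreover have "g s = g t \<longleftrightarrow> tequiv A (g s) (g t)" using D(5) gs' gt' by blast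
    ultimately show "s = t \<longleftrightarrow> tequiv B s t" by simp
  qed
qed


locale mainK =
  fixes K :: "'a ida" and Ta :: "'a ida \<Rightarrow> 'a set"
  assumes tA: "toda Ta K" and T1a: "T1_at Ta"

sublocale mainK \<subseteq> idaO K
  apply unfold_locales using toda_D[OF tA] by auto

context mainK begin

abbreviation "TT \<equiv> Ta K"
abbreviation "hh \<equiv> hdown K TT"

lemma TT_C: "TT \<subseteq> C" using T1a ida unfolding T1_at_def inv_submonoid_def by blast
lemma W_TT: "W \<subseteq> TT" using T1a ida unfolding T1_at_def by blast
lemma e_TT: "e \<in> TT" using T1a ida unfolding T1_at_def inv_submonoid_def by blast
lemma m_TT: "x \<in> TT \<Longrightarrow> y \<in> TT \<Longrightarrow> m x y \<in> TT" using T1a ida unfolding T1_at_def inv_submonoid_def by blast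
lemma s_TT: "x \<in> TT \<Longrightarrow> s x \<in> TT" using T1a ida unfolding T1_at_def inv_submonoid_def by blast

lemma H1: "S \<subseteq> TT \<Longrightarrow> hh (J S) = S"
proof
  assume S: "S \<subseteq> TT"
  have SC: "S \<subseteq> C" using S TT_C by blast
  show "S \<subseteq> hh (J S)" unfolding hdown_def using S SC J_upper by blast
  show "hh (J S) \<subseteq> S"
  proof
    fix t assume "t \<in> hh (J S)"
    then have t: "t \<in> TT" "le t (J S)" unfolding hdown_def by auto
    have tC: "t \<in> C" using t TT_C by blast
    have "J (insert t S) = J S" using J_insert[OF SC tC] t(2) le_def' by simp
    then have "insert t S = S" using toda_D(4)[OF tA, of "insert t S" S] S t by blast
    then show "t \<in> S" by blast
  qed
qed

lemma allJ: "k \<in> C \<Longrightarrow> \<exists>S\<subseteq>TT. k = J S"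
proof -
  define A' where "A' = {x \<in> C. \<exists>S\<subseteq>TT. x = J S}"
  have "A' = C"
  proof (rule toda_D(3)[OF tA])
    show "TT \<subseteq> A'" unfolding A'_def
    proof
      fix t assume t: "t \<in> TT"
      then have "t \<in> C" "t = J {t}" using TT_C J_single by auto
      then show "t \<in> {x \<in> C. \<exists>S\<subseteq>TT. x = J S}" using t by blast
    qed
    show "A' \<subseteq> C" unfolding A'_def by blast
    show "\<forall>x\<in>A'. \<forall>y\<in>A'. m x y \<in> A'"
    proof (intro ballI)
      fix x y assume "x \<in> A'" "y \<in> A'"
      then obtain S R where SR: "S \<subseteq> TT" "R \<subseteq> TT" "x = J S" "y = J R" unfolding A'_def by blast
      have "m x y = J {m a b | a b. a \<in> S \<and> b \<in> R}" using SR m_J_J TT_C by blast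
      moreover have "{m a b | a b. a \<in> S \<and> b \<in> R} \<subseteq> TT" using SR m_TT by blast
      moreover have "m x y \<in> C" using SR m_cl J_cl TT_C by (meson subset_trans)
      ultimately show "m x y \<in> A'" unfolding A'_def by blast
    qed
    show "\<forall>x\<in>A'. s x \<in> A'"
    proof
      fix x assume "x \<in> A'"
      then obtain S where S: "S \<subseteq> TT" "x = J S" unfolding A'_def by blast
      have "s x = J (s ` S)" using S s_J TT_C by (meson subset_trans)
      moreover have "s ` S \<subseteq> TT" using S s_TT by blast
      moreover have "s x \<in> C" using S s_cl J_cl TT_C by (meson subset_trans)
      ultimately show "s x \<in> A'" unfolding A'_def by blast
    qed
    show "\<forall>B\<subseteq>A'. J B \<in> A'"
    proof (intro allI impI)
      fix B assume B: "B \<subseteq> A'"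
      define Sx where "Sx = (\<lambda>x. SOME S. S \<subseteq> TT \<and> x = J S)"
      have Sx: "Sx x \<subseteq> TT \<and> x = J (Sx x)" if "x \<in> B" for x
      proof -
        have "\<exists>S. S \<subseteq> TT \<and> x = J S" using that B unfolding A'_def by blast
        then show ?thesis unfolding Sx_def by (rule someI_ex)
      qed
      have BC: "B \<subseteq> C" using B unfolding A'_def by blast
      have F: "Sx ` B \<subseteq> Pow C" using Sx TT_C by blast
      have "J (\<Union> (Sx ` B)) = J (J ` (Sx ` B))" using J_Union[OF F] .
      also have "J ` (Sx ` B) = B"
      proof -
        have "\<And>x. x \<in> B \<Longrightarrow> J (Sx x) = x" using Sx by metis
        then show ?thesis by (force simp: image_image)
      qed
      finally have "J B = J (\<Union> (Sx ` B))" by simp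
      moreover have "\<Union> (Sx ` B) \<subseteq> TT" using Sx by blast
      moreover have "J B \<in> C" using BC J_cl by blast
      ultimately show "J B \<in> A'" unfolding A'_def by blast
    qed
  qed
  then show "k \<in> C \<Longrightarrow> \<exists>S\<subseteq>TT. k = J S" unfolding A'_def by blast
qed

lemma H2: "k \<in> C \<Longrightarrow> J (hh k) = k"
  using allJ H1 by metis

lemma hh_sub: "hh k \<subseteq> TT" unfolding hdown_def by blast
lemma hh_C: "hh k \<subseteq> C" using hh_sub TT_C by blast

lemma hh_J: "X \<subseteq> C \<Longrightarrow> hh (J X) = \<Union> (hh ` X)"
proof -
  assume X: "X \<subseteq> C"
  have F: "hh ` X \<subseteq> Pow C" using hh_C by blast
  have "J (\<Union> (hh ` X)) = J (J ` (hh ` X))" using J_Union[OF F] .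
  also have "J ` (hh ` X) = X"
  proof -
    have "\<And>x. x \<in> X \<Longrightarrow> J (hh x) = x" using H2 X by blast
    then show ?thesis by (force simp: image_image)
  qed
  finally have "hh (J X) = hh (J (\<Union> (hh ` X)))" by simp
  also have "\<dots> = \<Union> (hh ` X)" by (rule H1) (use hh_sub in blast)
  finally show ?thesis .
qed

lemma hh_m: "x \<in> C \<Longrightarrow> y \<in> C \<Longrightarrow> hh (m x y) = {m a b | a b. a \<in> hh x \<and> b \<in> hh y}"
proof -
  assume x: "x \<in> C" and y: "y \<in> C"
  have "m x y = J {m a b | a b. a \<in> hh x \<and> b \<in> hh y}" using m_J_J[OF hh_C[of x] hh_C[of y]] H2[OF x] H2[OF y] by simp
  moreover have "{m a b | a b. a \<in> hh x \<and> b \<in> hh y} \<subseteq> TT" using hh_sub m_TT by blast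
  ultimately show ?thesis using H1 by simp
qed

lemma hh_s: "x \<in> C \<Longrightarrow> hh (s x) = s ` hh x"
proof -
  assume x: "x \<in> C"
  have "s x = J (s ` hh x)" using s_J[OF hh_C[of x]] H2[OF x] by simp
  moreover have "s ` hh x \<subseteq> TT" using hh_sub s_TT by blast
  ultimately show ?thesis using H1 by simp
qed

lemma hh_n: "x \<in> C \<Longrightarrow> hh (n x) = {n x}"
proof -
  assume x: "x \<in> C"
  have "n x \<in> TT" using nW x W_TT by blast
  then show ?thesis using H1[of "{n x}"] J_single TT_C by auto
qed

lemma hh_e: "hh e = {e}" using H1[of "{e}"] J_single e_cl e_TT by simp

lemma hh_bij: "bij_betw hh C (Pow TT)"
  unfolding bij_betw_def
proof
  show "inj_on hh C" unfolding inj_on_def using H2 by metis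
  show "hh ` C = Pow TT"
  proof
    show "hh ` C \<subseteq> Pow TT" using hh_sub by blast
    show "Pow TT \<subseteq> hh ` C"
    proof
      fix S assume "S \<in> Pow TT"
      then have S: "S \<subseteq> TT" by blast
      then have "S = hh (J S)" using H1 by simp
      moreover have "J S \<in> C" using S TT_C J_cl by blast
      ultimately show "S \<in> hh ` C" by blast
    qed
  qed
qed

lemma iso_box: "ida_iso K (box_ida K TT) hh"
  unfolding ida_iso_def
proof
  show "bij_betw hh (ida_carrier K) (ida_carrier (box_ida K TT))" using hh_bij by (simp add: box_ida_def)
  show "ida_hom K (box_ida K TT) hh"
    unfolding ida_hom_def
  proof (intro conjI ballI allI impI)
    show "hh ` C \<subseteq> ida_carrier (box_ida K TT)" using hh_sub by (auto simp: box_ida_def)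
    show "hh (J X) = ida_Sup (box_ida K TT) (hh ` X)" if "X \<subseteq> C" for X
      using hh_J that by (simp add: box_ida_def)
    show "hh (m x y) = ida_mult (box_ida K TT) (hh x) (hh y)" if "x \<in> C" "y \<in> C" for x y
      using H2 that by (simp add: box_ida_def)
    show "hh (s x) = ida_inv (box_ida K TT) (hh x)" if "x \<in> C" for x
      using H2 that by (simp add: box_ida_def)
    show "hh (n x) = ida_neg (box_ida K TT) (hh x)" if "x \<in> C" for x
      using H2 that by (simp add: box_ida_def)
    show "hh e = ida_unit (box_ida K TT)" using hh_e by (simp add: box_ida_def)
  qed
qed

end


context mainK begin

lemma iso_pset:
  fixes Tl :: "('a \<Rightarrow> 'a) ida \<Rightarrow> ('a \<Rightarrow> 'a) set"
  assumes T2: "T2_at Ta Tl"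
  shows "ida_iso K (pset_ida MM (Tl (lin_ida MM))) (\<lambda>k. (\<lambda>k. \<lambda>w\<in>W. bullet K k w) ` hh k)"
proof -
  define L where "L = Tl (lin_ida MM)"
  define \<phi> where "\<phi> = (\<lambda>k. \<lambda>w\<in>W. bullet K k w)"
  have im: "im_iso K TT (lin_ida MM) L \<phi>"
    using T2 ida oml toda_D(5)[OF tA] unfolding T2_at_def L_def \<phi>_def by blast
  have pb: "bij_betw \<phi> TT L" using im unfolding im_iso_def by blast
  have pm: "\<And>x y. x \<in> TT \<Longrightarrow> y \<in> TT \<Longrightarrow> \<phi> (m x y) = ida_mult (lin_ida MM) (\<phi> x) (\<phi> y)"
    using im unfolding im_iso_def by blast
  have ps: "\<And>x. x \<in> TT \<Longrightarrow> \<phi> (s x) = ida_inv (lin_ida MM) (\<phi> x)"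
    using im unfolding im_iso_def by blast
  have pe: "\<phi> e = ida_unit (lin_ida MM)" using im unfolding im_iso_def by blast
  define F where "F = (\<lambda>k. \<phi> ` hh k)"
  have P: "ida_carrier (pset_ida MM L) = Pow L" "ida_Sup (pset_ida MM L) = Union"
    "\<And>A B. ida_mult (pset_ida MM L) A B = {ida_mult (lin_ida MM) a b | a b. a \<in> A \<and> b \<in> B}"
    "\<And>A. ida_inv (pset_ida MM L) A = ida_inv (lin_ida MM) ` A"
    "\<And>A. ida_neg (pset_ida MM L) A = {proj MM (n (oml_Sup MM ((\<lambda>a. a (oml_top MM)) ` A)))}"
    "ida_unit (pset_ida MM L) = {ida_unit (lin_ida MM)}"
    by (simp_all add: pset_ida_def)
  have "ida_iso K (pset_ida MM L) F"
    unfolding ida_iso_def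
  proof
    have "bij_betw ((`) \<phi> \<circ> hh) C (Pow L)" using bij_betw_trans[OF hh_bij bij_betw_image_Pow[OF pb]] .
    moreover have "(`) \<phi> \<circ> hh = F" unfolding F_def by (simp add: fun_eq_iff)
    ultimately show "bij_betw F (ida_carrier K) (ida_carrier (pset_ida MM L))" using P by simp
    show "ida_hom K (pset_ida MM L) F"
      unfolding ida_hom_def
    proof (intro conjI ballI allI impI)
      show "F ` C \<subseteq> ida_carrier (pset_ida MM L)" unfolding F_def P using pb hh_sub bij_betwE by blast
      show "F (J X) = ida_Sup (pset_ida MM L) (F ` X)" if "X \<subseteq> C" for X
        unfolding F_def P using hh_J[OF that] by auto
      show "F (m x y) = ida_mult (pset_ida MM L) (F x) (F y)" if x: "x \<in> C" and y: "y \<in> C" for x y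
      proof -
        have hm: "\<And>a b. a \<in> hh x \<Longrightarrow> b \<in> hh y \<Longrightarrow> \<phi> (m a b) = ida_mult (lin_ida MM) (\<phi> a) (\<phi> b)"
          using pm hh_sub by blast
        have "\<phi> ` {m a b |a b. a \<in> hh x \<and> b \<in> hh y} = {ida_mult (lin_ida MM) a b | a b. a \<in> \<phi> ` hh x \<and> b \<in> \<phi> ` hh y}"
        proof (rule set_eqI, rule iffI)
          fix z assume "z \<in> \<phi> ` {m a b |a b. a \<in> hh x \<and> b \<in> hh y}"
          then obtain a b where ab: "a \<in> hh x" "b \<in> hh y" "z = \<phi> (m a b)" by blast
          then have "z = ida_mult (lin_ida MM) (\<phi> a) (\<phi> b)" using hm by simp
          then show "z \<in> {ida_mult (lin_ida MM) a b | a b. a \<in> \<phi> ` hh x \<and> b \<in> \<phi> ` hh y}" using ab by blast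
        next
          fix z assume "z \<in> {ida_mult (lin_ida MM) a b | a b. a \<in> \<phi> ` hh x \<and> b \<in> \<phi> ` hh y}"
          then obtain a b where ab: "a \<in> hh x" "b \<in> hh y" "z = ida_mult (lin_ida MM) (\<phi> a) (\<phi> b)" by blast
          then have "z = \<phi> (m a b)" using hm by simp
          then show "z \<in> \<phi> ` {m a b |a b. a \<in> hh x \<and> b \<in> hh y}" using ab by blast
        qed
        then show ?thesis unfolding F_def P hh_m[OF x y] .
      qed
      show "F (s x) = ida_inv (pset_ida MM L) (F x)" if x: "x \<in> C" for x
      proof -
        have "\<And>a. a \<in> hh x \<Longrightarrow> \<phi> (s a) = ida_inv (lin_ida MM) (\<phi> a)" using ps hh_sub by blast
        then have "\<phi> ` s ` hh x = ida_inv (lin_ida MM) ` \<phi> ` hh x" by (simp add: image_image)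
        then show ?thesis unfolding F_def P hh_s[OF x] .
      qed
      show "F (n x) = ida_neg (pset_ida MM L) (F x)" if x: "x \<in> C" for x
      proof -
        have "\<And>a. \<phi> a (oml_top MM) = n (n (m a (oml_top MM)))" unfolding \<phi>_def bullet_def using top_W by simp
        then have "(\<lambda>a. a (oml_top MM)) ` \<phi> ` hh x = (\<lambda>a. n (n (m a (oml_top MM)))) ` hh x"
          by (simp add: image_image)
        then have "proj MM (n (oml_Sup MM ((\<lambda>a. a (oml_top MM)) ` \<phi> ` hh x))) = (\<lambda>w\<in>W. n (n (m (n x) w)))"
          using neg_key[OF hh_C H2[OF x]] by simp
        also have "\<dots> = \<phi> (n x)" unfolding \<phi>_def bullet_def ..
        finally show ?thesis unfolding F_def P hh_n[OF x] by simp
      qed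
      show "F e = ida_unit (pset_ida MM L)" unfolding F_def P hh_e using pe by simp
    qed
  qed
  then show ?thesis unfolding F_def L_def \<phi>_def .
qed

end

theorem corollary6p4:
  fixes Ta :: "'a ida \<Rightarrow> 'a set"
    and Tl :: "('a \<Rightarrow> 'a) ida \<Rightarrow> ('a \<Rightarrow> 'a) set"
    and Tp :: "'a set ida \<Rightarrow> 'a set set"
    and Tq :: "('a \<Rightarrow> 'a) set ida \<Rightarrow> ('a \<Rightarrow> 'a) set set"
    and K :: "'a ida"
  assumes T1: "T1_at Ta" "T1_at Tl" "T1_at Tp" "T1_at Tq"
    and T2: "T2_at Ta Tl"
    and T3: "T3_at Tl Tq"
    and T4: "T4_at Ta Ta" "T4_at Ta Tl" "T4_at Ta Tp" "T4_at Ta Tq"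
            "T4_at Tl Ta" "T4_at Tl Tl" "T4_at Tl Tp" "T4_at Tl Tq"
            "T4_at Tp Ta" "T4_at Tp Tl" "T4_at Tp Tp" "T4_at Tp Tq"
            "T4_at Tq Ta" "T4_at Tq Tl" "T4_at Tq Tp" "T4_at Tq Tq"
    and K: "toda Ta K"
  shows "toda Tq (pset_ida (tests_oml K) (Tl (lin_ida (tests_oml K)))) \<and>
         toda Tp (box_ida K (Ta K)) \<and>
         (\<exists>f. ida_iso K (pset_ida (tests_oml K) (Tl (lin_ida (tests_oml K)))) f) \<and>
         (\<exists>f. ida_iso K (box_ida K (Ta K)) f) \<and>
         (\<exists>f. ida_iso (pset_ida (tests_oml K) (Tl (lin_ida (tests_oml K)))) (box_ida K (Ta K)) f)"
proof -
  interpret mainK K Ta using K T1(1) by unfold_locales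
  have isoP: "ida_iso K (pset_ida (tests_oml K) (Tl (lin_ida (tests_oml K)))) (\<lambda>k. (\<lambda>k. \<lambda>w\<in>W. bullet K k w) ` hh k)"
    using iso_pset[OF T2] .
  have isoB: "ida_iso K (box_ida K (Ta K)) hh" using iso_box .
  have 1: "toda Tq (pset_ida (tests_oml K) (Tl (lin_ida (tests_oml K))))"
    using toda_transfer[OF K isoP T4(4) T4(13) T1(4) T1(1)] .
  have 2: "toda Tp (box_ida K (Ta K))"
    using toda_transfer[OF K isoB T4(3) T4(9) T1(3) T1(1)] .
  have 3: "ida_iso (pset_ida (tests_oml K) (Tl (lin_ida (tests_oml K)))) (box_ida K (Ta K))
      (hh \<circ> inv_into C (\<lambda>k. (\<lambda>k. \<lambda>w\<in>W. bullet K k w) ` hh k))"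
    using iso_compose[OF ida isoP isoB] .
  show ?thesis using 1 2 3 isoP isoB by blast
qed

end
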